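(* Let $e$ be a directed edge of $\Gamma$ labeled $y$, not on $T$, from $g$ to $g'=gy$. Write $\gamma=\mathrm{nf}(g)=x^{i_n}y^{\epsilon_n}\cdots x^{i_1}y^{\epsilon_1}x^{i_0}$ (so $n\ge1$, $i_0\ge1$), let $s_k=i_k+i_{k-1}+\cdots+i_0$ for $0\le k\le n$, and let $m=\min\{k\mid s_k\le0\}$ if this set is nonempty, and $m=n$ otherwise. Then $m\ge1$ and: (1) If $m=n$ or $s_m\neq0$ or $\epsilon_{m+1}=1$, then $\gamma'=\mathrm{nf}(\gamma y)=x^{i_n}y^{\epsilon_n}\cdots x^{i_{m+1}}y^{\epsilon_{m+1}}x^{s_m}yx^{-s_{m-1}-1}y^{\epsilon_m}x^{i_{m-1}}y^{\epsilon_{m-1}}\cdots x^{i_1}y^{\epsilon_1}x^{i_0+1}$. (2) Otherwise, if $m<n$, $s_m=0$ and $\epsilon_{m+1}=-1$, then $\gamma'=\mathrm{nf}(\gamma y)=x^{i_n}y^{\epsilon_n}\cdots x^{i_{m+2}}y^{\epsilon_{m+2}}x^{i_{m+1}+i_m-1}y^{\epsilon_m}x^{i_{m-1}}y^{\epsilon_{m-1}}\cdots x^{i_1}y^{\epsilon_1}x^{i_0+1}$. In each case there is a sequence of $\Sigma$-rewritings from $\gamma y$ to $\gamma'$ in which no $y^{-1}$-rules are used and exactly $m$ $y$-rules are used, whose sizes, in the order used, are $s_0,s_1,\dots,s_{m-1}$.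
   Context: $F$ is Thompson's group with generators $x,y$, $A=\{x^{\pm1},y^{\pm1}\}$, $\Gamma$ its Cayley graph over $A$. Guba–Sapir's convergent rewriting system $\Sigma$ consists of free reductions $aa^{-1}\to\emptyset$ ($a\in A$), the $y$-rules of size $i$: $y^\epsilon x^iy\to x^iyx^{-i-1}y^\epsilon x^{i+1}$, and the $y^{-1}$-rules of size $i$: $y^\epsilon x^{i+1}y^{-1}\to x^{i+1}y^{-1}x^{-i}y^\epsilon x^i$ ($\epsilon\in\{1,-1\}$, $i\ge1$); rewriting may be applied to any subword. $\mathcal N$ is the set of $\Sigma$-irreducible words (unique normal forms for $F$), and $\mathrm{nf}(w)$ denotes the word of $\mathcal N$ representing the same element as $w$. $T$ is the subtree of $\Gamma$ whose non-backtracking paths from the identity are labeled exactly by the words of $\mathcal N$. *)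

theory Defs
  imports Main
begin

datatype letter = xp | xm | yp | ym

fun linv :: "letter \<Rightarrow> letter" where
  "linv xp = xm" | "linv xm = xp" | "linv yp = ym" | "linv ym = yp"

definition xpow :: "int \<Rightarrow> letter list" where
  "xpow i = (if i \<ge> 0 then replicate (nat i) xp else replicate (nat (- i)) xm)"

definition ylet :: "int \<Rightarrow> letter" where
  "ylet e = (if e = 1 then yp else ym)"

datatype rkind = FreeR | YR int | YinvR int

inductive rstep :: "rkind \<Rightarrow> letter list \<Rightarrow> letter list \<Rightarrow> bool" where
  free: "rstep FreeR (u @ [a, linv a] @ v) (u @ v)"
| yrule: "e \<in> {1, -1} \<Longrightarrow> i \<ge> 1 \<Longrightarrow>
    rstep (YR i) (u @ [ylet e] @ xpow i @ [yp] @ v)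
                 (u @ xpow i @ [yp] @ xpow (- i - 1) @ [ylet e] @ xpow (i + 1) @ v)"
| yinvrule: "e \<in> {1, -1} \<Longrightarrow> i \<ge> 1 \<Longrightarrow>
    rstep (YinvR i) (u @ [ylet e] @ xpow (i + 1) @ [ym] @ v)
                    (u @ xpow (i + 1) @ [ym] @ xpow (- i) @ [ylet e] @ xpow i @ v)"

inductive rewrseq :: "letter list \<Rightarrow> rkind list \<Rightarrow> letter list \<Rightarrow> bool" where
  rw_nil: "rewrseq w [] w"
| rw_cons: "rstep k w w' \<Longrightarrow> rewrseq w' ks w'' \<Longrightarrow> rewrseq w (k # ks) w''"

definition reduces1 :: "letter list \<Rightarrow> letter list \<Rightarrow> bool" where
  "reduces1 w w' = (\<exists>k. rstep k w w')"

definition NF :: "letter list set" where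
  "NF = {w. \<not> (\<exists>w'. reduces1 w w')}"

text \<open>Two words represent the same element of F iff they are equivalent under the
  equivalence (Thue congruence) generated by Sigma (Sigma is a convergent presentation of F).\<close>
definition same_elem :: "letter list \<Rightarrow> letter list \<Rightarrow> bool" where
  "same_elem = (\<lambda>w v. reduces1 w v \<or> reduces1 v w)\<^sup>*\<^sup>*"

definition nf :: "letter list \<Rightarrow> letter list" where
  "nf w = (THE v. v \<in> NF \<and> same_elem w v)"

text \<open>The edge of the Cayley graph from (the element of) g labelled a lies on T iff some
  path from the identity labelled by a word of N traverses it (in either direction).\<close>
definition on_T :: "letter list \<Rightarrow> letter \<Rightarrow> bool" where
  "on_T g a = (\<exists>w \<in> NF. \<exists>j < length w.
      (same_elem (take j w) g \<and> w ! j = a) \<or> (same_elem (take j w) (g @ [a]) \<and> w ! j = linv a))"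

definition syl :: "(nat \<Rightarrow> int) \<Rightarrow> (nat \<Rightarrow> int) \<Rightarrow> nat \<Rightarrow> letter list" where
  "syl i e k = xpow (i k) @ [ylet (e k)]"

definition syls :: "(nat \<Rightarrow> int) \<Rightarrow> (nat \<Rightarrow> int) \<Rightarrow> nat \<Rightarrow> nat \<Rightarrow> letter list" where
  "syls i e a b = concat (map (syl i e) (rev [a..<Suc b]))"

definition psum :: "(nat \<Rightarrow> int) \<Rightarrow> nat \<Rightarrow> int" where
  "psum i k = (\<Sum>j\<le>k. i j)"

definition mindex :: "(nat \<Rightarrow> int) \<Rightarrow> nat \<Rightarrow> nat" where
  "mindex i n = (if \<exists>k \<le> n. psum i k \<le> 0 then (LEAST k. k \<le> n \<and> psum i k \<le> 0) else n)"

end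

theory Submission
  imports Defs
begin

lemma ylet_1[simp]: "ylet 1 = yp" by (simp add: ylet_def)
lemma ylet_m1[simp]: "ylet (-1) = ym" by (simp add: ylet_def)
lemma ylet_cases: "e \<in> {1,-1} \<Longrightarrow> (e = 1 \<and> ylet e = yp) \<or> (e = -1 \<and> ylet e = ym)"
  by (auto simp: ylet_def)
lemma linv_ylet: "e \<in> {1,-1} \<Longrightarrow> linv (ylet e) = ylet (-e)"
  by (auto simp: ylet_def)
lemma ylet_ne_x[simp]: "ylet e \<noteq> xp" "ylet e \<noteq> xm" "xp \<noteq> ylet e" "xm \<noteq> ylet e"
  by (auto simp: ylet_def)
lemma xpow_0[simp]: "xpow 0 = []" by (simp add: xpow_def)
lemma xpow_pos: "i \<ge> 0 \<Longrightarrow> xpow i = replicate (nat i) xp" by (simp add: xpow_def)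
lemma xpow_neg: "i \<le> 0 \<Longrightarrow> xpow i = replicate (nat (-i)) xm" by (simp add: xpow_def)
lemma ylet_not_in_xpow[simp]: "ylet e \<notin> set (xpow i)" "yp \<notin> set (xpow i)" "ym \<notin> set (xpow i)"
  by (auto simp: xpow_def ylet_def)

lemma rstep_ctx: "rstep k w w' \<Longrightarrow> rstep k (p @ w @ q) (p @ w' @ q)"
proof (induction rule: rstep.induct)
  case (free u a v)
  then show ?case using rstep.free[of "p @ u" a "v @ q"] by simp
next
  case (yrule e i u v)
  then show ?case using rstep.yrule[of e i "p @ u" "v @ q"] by simp
next
  case (yinvrule e i u v)
  then show ?case using rstep.yinvrule[of e i "p @ u" "v @ q"] by simp
qed

lemma rewrseq_trans: "rewrseq a ks b \<Longrightarrow> rewrseq b ks' c \<Longrightarrow> rewrseq a (ks @ ks') c"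
  by (induction rule: rewrseq.induct) (auto intro: rewrseq.intros)

lemma rewrseq_ctx: "rewrseq w ks w' \<Longrightarrow> rewrseq (p @ w @ q) ks (p @ w' @ q)"
  by (induction rule: rewrseq.induct) (auto intro: rewrseq.intros rstep_ctx)

lemma rewrseq_one: "rstep k a b \<Longrightarrow> rewrseq a [k] b"
  by (auto intro: rewrseq.intros)

lemma rewrseq_red: "rewrseq w ks w' \<Longrightarrow> reduces1\<^sup>*\<^sup>* w w'"
  by (induction rule: rewrseq.induct) (auto simp: reduces1_def intro: converse_rtranclp_into_rtranclp)

lemma free_step: "rstep FreeR (u @ [a, linv a] @ v) (u @ v)"
  by (rule rstep.free)

lemma refl_seq: "\<exists>ks. set ks \<subseteq> {FreeR} \<and> rewrseq w ks w"
  by (intro exI[of _ "[]"]) (auto intro: rewrseq.intros)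

lemma pm_merge: "\<exists>ks. set ks \<subseteq> {FreeR} \<and>
   rewrseq (replicate p xp @ replicate q xm) ks (replicate (p - q) xp @ replicate (q - p) xm)"
proof (induction p arbitrary: q)
  case 0 then show ?case using refl_seq by simp
next
  case (Suc p)
  show ?case
  proof (cases q)
    case 0 then show ?thesis using refl_seq by simp
  next
    case (Suc q')
    obtain ks where ks: "set ks \<subseteq> {FreeR}"
      "rewrseq (replicate p xp @ replicate q' xm) ks (replicate (p - q') xp @ replicate (q' - p) xm)"
      using Suc.IH by blast
    have "rstep FreeR (replicate p xp @ [xp, linv xp] @ replicate q' xm) (replicate p xp @ replicate q' xm)"
      by (rule rstep.free)
    moreover have "replicate (Suc p) xp @ replicate q xm = replicate p xp @ [xp, linv xp] @ replicate q' xm"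
      using Suc by (simp add: replicate_append_same[symmetric])
    ultimately show ?thesis using ks Suc
      by (intro exI[of _ "FreeR # ks"]) (auto intro: rewrseq.intros)
  qed
qed

lemma mp_merge: "\<exists>ks. set ks \<subseteq> {FreeR} \<and>
   rewrseq (replicate p xm @ replicate q xp) ks (replicate (p - q) xm @ replicate (q - p) xp)"
proof (induction p arbitrary: q)
  case 0 then show ?case using refl_seq by simp
next
  case (Suc p)
  show ?case
  proof (cases q)
    case 0 then show ?thesis using refl_seq by simp
  next
    case (Suc q')
    obtain ks where ks: "set ks \<subseteq> {FreeR}"
      "rewrseq (replicate p xm @ replicate q' xp) ks (replicate (p - q') xm @ replicate (q' - p) xp)"
      using Suc.IH by blast
    have "rstep FreeR (replicate p xm @ [xm, linv xm] @ replicate q' xp) (replicate p xm @ replicate q' xp)"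
      by (rule rstep.free)
    moreover have "replicate (Suc p) xm @ replicate q xp = replicate p xm @ [xm, linv xm] @ replicate q' xp"
      using Suc by (simp add: replicate_append_same[symmetric])
    ultimately show ?thesis using ks Suc
      by (intro exI[of _ "FreeR # ks"]) (auto intro: rewrseq.intros)
  qed
qed

lemma xmerge_seq: "a + b = c \<Longrightarrow> \<exists>ks. set ks \<subseteq> {FreeR} \<and> rewrseq (xpow a @ xpow b) ks (xpow c)"
proof -
  assume c: "a + b = c"
  consider "a \<ge> 0" "b \<ge> 0" | "a < 0" "b < 0" | "a \<ge> 0" "b < 0" | "a < 0" "b \<ge> 0" by linarith
  then show ?thesis
  proof cases
    case 1
    then have "xpow a @ xpow b = xpow c" using c
      by (simp add: xpow_pos replicate_add[symmetric] nat_add_distrib)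
    then show ?thesis using refl_seq by metis
  next
    case 2
    then have "xpow a @ xpow b = xpow c" using c
      by (simp add: xpow_neg replicate_add[symmetric] nat_add_distrib)
    then show ?thesis using refl_seq by metis
  next
    case 3
    obtain ks where ks: "set ks \<subseteq> {FreeR}" "rewrseq (replicate (nat a) xp @ replicate (nat (-b)) xm) ks
       (replicate (nat a - nat (-b)) xp @ replicate (nat (-b) - nat a) xm)" using pm_merge by blast
    have "replicate (nat a - nat (-b)) xp @ replicate (nat (-b) - nat a) xm = xpow c"
      using 3 c by (cases "c \<ge> 0") (auto simp: xpow_def nat_diff_distrib')
    then show ?thesis using ks 3 by (auto simp: xpow_def)
  next
    case 4
    obtain ks where ks: "set ks \<subseteq> {FreeR}" "rewrseq (replicate (nat (-a)) xm @ replicate (nat b) xp) ks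
       (replicate (nat (-a) - nat b) xm @ replicate (nat b - nat (-a)) xp)" using mp_merge by blast
    have "replicate (nat (-a) - nat b) xm @ replicate (nat b - nat (-a)) xp = xpow c"
      using 4 c by (cases "c \<ge> 0") (auto simp: xpow_def nat_diff_distrib')
    then show ?thesis using ks 4 by (auto simp: xpow_def)
  qed
qed

lemma xmerge: "a + b = c \<Longrightarrow> reduces1\<^sup>*\<^sup>* (xpow a @ xpow b) (xpow c)"
  using xmerge_seq rewrseq_red by blast

fun xv :: "letter \<Rightarrow> int" where "xv xp = 1" | "xv xm = -1" | "xv yp = 0" | "xv ym = 0"
fun isy :: "letter \<Rightarrow> bool" where "isy yp = True" | "isy ym = True" | "isy xp = False" | "isy xm = False"
definition xsum :: "letter list \<Rightarrow> int" where "xsum w = sum_list (map xv w)"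
fun hts :: "int \<Rightarrow> letter list \<Rightarrow> int list" where
  "hts h [] = []" | "hts h (c # w) = (if isy c then h # hts h w else hts (h + xv c) w)"

lemma xsum_simps[simp]: "xsum [] = 0" "xsum (c # w) = xv c + xsum w" "xsum (u @ v) = xsum u + xsum v"
  by (auto simp: xsum_def)
lemma isy_xv: "isy c \<Longrightarrow> xv c = 0" by (cases c) auto
lemma hts_append: "hts h (u @ v) = hts h u @ hts (h + xsum u) v"
  by (induction u arbitrary: h) (auto simp: algebra_simps isy_xv)
lemma xsum_xpow[simp]: "xsum (xpow i) = i"
proof -
  have a: "xsum (replicate n xp) = int n" for n by (induction n) auto
  have b: "xsum (replicate n xm) = - int n" for n by (induction n) auto
  show ?thesis by (auto simp: xpow_def a b)
qed
lemma hts_xpow[simp]: "hts h (xpow i) = []"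
proof -
  have a: "hts h (replicate n xp) = []" for n h by (induction n arbitrary: h) auto
  have b: "hts h (replicate n xm) = []" for n h by (induction n arbitrary: h) auto
  show ?thesis by (auto simp: xpow_def a b)
qed
lemma isy_ylet[simp]: "isy (ylet e) = True" by (simp add: ylet_def)
lemma xv_ylet[simp]: "xv (ylet e) = 0" by (simp add: ylet_def)

definition mx :: "int list \<Rightarrow> int" where "mx H = (if H = [] then 0 else Max (set H))"
definition meas :: "letter list \<Rightarrow> nat list" where
  "meas w = map (\<lambda>z. nat (mx (hts 0 w) - z)) (hts 0 w)"

lemma mx_eq: assumes "a < b" "c < b"
  shows "mx (P @ [a, b] @ Q) = mx (P @ [b, c] @ Q)"
proof -
  let ?S = "insert b (set P \<union> set Q)"
  have f: "finite ?S" by simp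
  have "b \<le> Max ?S" by simp
  have "Max (insert a ?S) = max a (Max ?S)" by (rule Max_insert) auto
  moreover have "a \<le> Max ?S" using assms \<open>b \<le> Max ?S\<close> by linarith
  ultimately have 1: "Max (insert a ?S) = Max ?S" by (simp add: max_absorb2)
  have "Max (insert c ?S) = max c (Max ?S)" by (rule Max_insert) auto
  moreover have "c \<le> Max ?S" using assms \<open>b \<le> Max ?S\<close> by linarith
  ultimately have 2: "Max (insert c ?S) = Max ?S" by (simp add: max_absorb2)
  have "set (P @ [a, b] @ Q) = insert a ?S" "set (P @ [b, c] @ Q) = insert c ?S" by auto
  then show ?thesis unfolding mx_def using 1 2 by simp
qed

lemma mx_ge: "z \<in> set H \<Longrightarrow> z \<le> mx H"
  by (auto simp: mx_def)

lemma lex_dec: assumes "a < b" "c < b"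
  shows "(map (\<lambda>z. nat (mx (P @ [b, c] @ Q) - z)) (P @ [b, c] @ Q),
          map (\<lambda>z. nat (mx (P @ [a, b] @ Q) - z)) (P @ [a, b] @ Q)) \<in> lenlex less_than"
proof -
  let ?M = "mx (P @ [a, b] @ Q)"
  have M: "mx (P @ [b, c] @ Q) = ?M" using mx_eq[OF assms] by simp
  have "b \<le> ?M" by (rule mx_ge) simp
  then have lt: "nat (?M - b) < nat (?M - a)" using assms by simp
  show ?thesis unfolding M lenlex_conv lex_conv using lt
    by (auto intro!: exI[of _ "map (\<lambda>z. nat (?M - z)) P"])
qed

definition ordR :: "(letter list \<times> letter list) set" where
  "ordR = inv_image (lenlex less_than <*lex*> less_than) (\<lambda>w. (meas w, length w))"

lemma wf_ordR: "wf ordR"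
  unfolding ordR_def by (intro wf_inv_image wf_lex_prod wf_lenlex wf_less_than)

lemma red_dec: assumes "reduces1 w w'" shows "(w', w) \<in> ordR"
proof -
  obtain k where "rstep k w w'" using assms by (auto simp: reduces1_def)
  then show ?thesis
  proof cases
    case (free u a v)
    show ?thesis
    proof (cases "isy a")
      case True
      then have "isy (linv a)" by (cases a) auto
      then have "hts 0 w = hts 0 u @ [xsum u, xsum u] @ hts (xsum u) v" "hts 0 w' = hts 0 u @ hts (xsum u) v"
        using free True by (auto simp: hts_append)
      then show ?thesis unfolding ordR_def meas_def by (auto simp: lenlex_conv)
    next
      case False
      then have "\<not> isy (linv a)" "xv (linv a) = - xv a" by (cases a; auto)+
      then have "hts 0 w = hts 0 w'"
        using free False by (auto simp: hts_append)
      then show ?thesis unfolding ordR_def meas_def using free by auto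
    qed
  next
    case (yrule e i u v)
    let ?H = "xsum u"
    have "hts 0 w = hts 0 u @ [?H, ?H + i] @ hts (?H + i) v"
      "hts 0 w' = hts 0 u @ [?H + i, ?H - 1] @ hts (?H + i) v"
      using yrule by (auto simp: hts_append algebra_simps)
    then show ?thesis unfolding ordR_def meas_def using lex_dec[of ?H "?H+i" "?H - 1"] yrule by auto
  next
    case (yinvrule e i u v)
    let ?H = "xsum u"
    have "hts 0 w = hts 0 u @ [?H, ?H + i + 1] @ hts (?H + i + 1) v"
      "hts 0 w' = hts 0 u @ [?H + i + 1, ?H + 1] @ hts (?H + i + 1) v"
      using yinvrule by (auto simp: hts_append algebra_simps)
    then show ?thesis unfolding ordR_def meas_def using lex_dec[of ?H "?H+i+1" "?H + 1"] yinvrule by auto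
  qed
qed

lemma wf_red: "wf {(w', w). reduces1 w w'}"
  by (rule wf_subset[OF wf_ordR]) (auto intro: red_dec)

lemma newman:
  assumes wf: "wf {(b, a). r a b}"
    and lc: "\<And>a b c. r a b \<Longrightarrow> r a c \<Longrightarrow> \<exists>d. r\<^sup>*\<^sup>* b d \<and> r\<^sup>*\<^sup>* c d"
  shows "r\<^sup>*\<^sup>* a b \<Longrightarrow> r\<^sup>*\<^sup>* a c \<Longrightarrow> \<exists>d. r\<^sup>*\<^sup>* b d \<and> r\<^sup>*\<^sup>* c d"
proof (induction a arbitrary: b c rule: wf_induct_rule[OF wf])
  case (1 a)
  have IH: "\<And>y b c. r a y \<Longrightarrow> r\<^sup>*\<^sup>* y b \<Longrightarrow> r\<^sup>*\<^sup>* y c \<Longrightarrow> \<exists>d. r\<^sup>*\<^sup>* b d \<and> r\<^sup>*\<^sup>* c d"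
    using 1(1) by blast
  show ?case
  proof (cases "a = b")
    case True then show ?thesis using 1(3) by blast
  next
    case False
    show ?thesis
    proof (cases "a = c")
      case True then show ?thesis using 1(2) by blast
    next
      case False2: False
      from 1(2) False obtain b1 where b1: "r a b1" "r\<^sup>*\<^sup>* b1 b" by (auto elim: converse_rtranclpE)
      from 1(3) False2 obtain c1 where c1: "r a c1" "r\<^sup>*\<^sup>* c1 c" by (auto elim: converse_rtranclpE)
      obtain d where d: "r\<^sup>*\<^sup>* b1 d" "r\<^sup>*\<^sup>* c1 d" using lc[OF b1(1) c1(1)] by blast
      obtain e where e: "r\<^sup>*\<^sup>* b e" "r\<^sup>*\<^sup>* d e" using IH[OF b1(1) b1(2) d(1)] by blast
      have "r\<^sup>*\<^sup>* c1 e" using d(2) e(2) by (rule rtranclp_trans)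
      then obtain f where f: "r\<^sup>*\<^sup>* c f" "r\<^sup>*\<^sup>* e f" using IH[OF c1(1) c1(2)] by blast
      have "r\<^sup>*\<^sup>* b f" using e(1) f(2) by (rule rtranclp_trans)
      then show ?thesis using f(1) by blast
    qed
  qed
qed

lemma church_rosser:
  assumes conf: "\<And>a b c. r\<^sup>*\<^sup>* a b \<Longrightarrow> r\<^sup>*\<^sup>* a c \<Longrightarrow> \<exists>d. r\<^sup>*\<^sup>* b d \<and> r\<^sup>*\<^sup>* c d"
  shows "(\<lambda>w v. r w v \<or> r v w)\<^sup>*\<^sup>* a b \<Longrightarrow> \<exists>d. r\<^sup>*\<^sup>* a d \<and> r\<^sup>*\<^sup>* b d"
proof (induction rule: rtranclp_induct)
  case base then show ?case by blast
next
  case (step y z)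
  then obtain d where d: "r\<^sup>*\<^sup>* a d" "r\<^sup>*\<^sup>* y d" by blast
  from step(2) show ?case
  proof
    assume "r y z"
    then have "r\<^sup>*\<^sup>* y z" by blast
    then obtain f where f: "r\<^sup>*\<^sup>* d f" "r\<^sup>*\<^sup>* z f" using conf[OF d(2)] by blast
    have "r\<^sup>*\<^sup>* a f" using d(1) f(1) by (rule rtranclp_trans)
    then show ?thesis using f(2) by blast
  next
    assume "r z y"
    then have "r\<^sup>*\<^sup>* z d" using d(2) by (rule converse_rtranclp_into_rtranclp)
    then show ?thesis using d(1) by blast
  qed
qed

lemma wn:
  assumes wf: "wf {(b, a). r a b}"
  shows "\<exists>v. r\<^sup>*\<^sup>* w v \<and> \<not> (\<exists>v'. r v v')"
proof (induction w rule: wf_induct_rule[OF wf])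
  case (1 w)
  show ?case
  proof (cases "\<exists>v'. r w v'")
    case True
    then obtain v' where v': "r w v'" by blast
    then obtain v where v: "r\<^sup>*\<^sup>* v' v" "\<not> (\<exists>v'. r v v')" using 1 by blast
    have "r\<^sup>*\<^sup>* w v" using v' v(1) by (rule converse_rtranclp_into_rtranclp)
    then show ?thesis using v(2) by blast
  next
    case False then show ?thesis by blast
  qed
qed

abbreviation red :: "letter list \<Rightarrow> letter list \<Rightarrow> bool" where "red \<equiv> reduces1"

lemma conv: "red\<^sup>*\<^sup>* a b \<Longrightarrow> a = a' \<Longrightarrow> b = b' \<Longrightarrow> red\<^sup>*\<^sup>* a' b'" by simp

lemma Sy: "e \<in> {1,-1} \<Longrightarrow> i \<ge> 1 \<Longrightarrow>
  red\<^sup>*\<^sup>* (p @ [ylet e] @ xpow i @ [yp] @ q) (p @ xpow i @ [yp] @ xpow (-i-1) @ [ylet e] @ xpow (i+1) @ q)"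
  unfolding reduces1_def by (rule r_into_rtranclp, rule exI, rule rstep.yrule)

lemma Syi: "e \<in> {1,-1} \<Longrightarrow> i \<ge> 1 \<Longrightarrow>
  red\<^sup>*\<^sup>* (p @ [ylet e] @ xpow (i+1) @ [ym] @ q) (p @ xpow (i+1) @ [ym] @ xpow (-i) @ [ylet e] @ xpow i @ q)"
  unfolding reduces1_def by (rule r_into_rtranclp, rule exI, rule rstep.yinvrule)

lemma Sf: "e \<in> {1,-1} \<Longrightarrow> red\<^sup>*\<^sup>* (p @ [ylet e, ylet (-e)] @ q) (p @ q)"
  apply (rule r_into_rtranclp, unfold reduces1_def, rule exI)
  using rstep.free[of p "ylet e" q] linv_ylet[of e] by simp

lemma Sx: "a + b = c \<Longrightarrow> red\<^sup>*\<^sup>* (p @ xpow a @ xpow b @ q) (p @ xpow c @ q)"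
proof -
  assume "a + b = c"
  then obtain ks where "rewrseq (xpow a @ xpow b) ks (xpow c)" using xmerge_seq by blast
  then have "rewrseq (p @ (xpow a @ xpow b) @ q) ks (p @ xpow c @ q)" by (rule rewrseq_ctx)
  then show ?thesis by (auto dest: rewrseq_red)
qed

definition J :: "letter list \<Rightarrow> letter list \<Rightarrow> bool" where
  "J a b \<longleftrightarrow> (\<exists>d. red\<^sup>*\<^sup>* a d \<and> red\<^sup>*\<^sup>* b d)"

lemma JI: "red\<^sup>*\<^sup>* a d \<Longrightarrow> red\<^sup>*\<^sup>* b d \<Longrightarrow> J a b" by (auto simp: J_def)

lemma tr: "red\<^sup>*\<^sup>* a b \<Longrightarrow> red\<^sup>*\<^sup>* b c \<Longrightarrow> red\<^sup>*\<^sup>* a c" by (rule rtranclp_trans)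

lemma CP1:
  assumes "e \<in> {1,-1}" "i \<ge> 1"
  shows "J (xpow (i) @ [yp] @ v) ([ylet (-e)] @ xpow (i) @ [yp] @ xpow (-(i)-1) @ [ylet (e)] @ xpow (i+1) @ v)"
proof -
  have c1: "red\<^sup>*\<^sup>* ([ylet (-e)] @ xpow (i) @ [yp] @ xpow (-(i)-1) @ [ylet (e)] @ xpow (i+1) @ v) (xpow (i) @ [yp] @ xpow (-(i)-1) @ [ylet (-e)] @ xpow (i+1) @ xpow (-(i)-1) @ [ylet (e)] @ xpow (i+1) @ v)"
    by (rule conv[OF Sy[of "-e" "i" "[]" "xpow (-(i)-1) @ [ylet (e)] @ xpow (i+1) @ v"]]) (use assms in \<open>auto simp: algebra_simps\<close>)
  have c2: "red\<^sup>*\<^sup>* (xpow (i) @ [yp] @ xpow (-(i)-1) @ [ylet (-e)] @ xpow (i+1) @ xpow (-(i)-1) @ [ylet (e)] @ xpow (i+1) @ v) (xpow (i) @ [yp] @ xpow (-(i)-1) @ [ylet (-e)] @ [ylet (e)] @ xpow (i+1) @ v)"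
    by (rule conv[OF Sx[of "i+1" "-(i)-1" "0" "xpow (i) @ [yp] @ xpow (-(i)-1) @ [ylet (-e)]" "[ylet (e)] @ xpow (i+1) @ v"]]) (use assms in \<open>auto simp: algebra_simps\<close>)
  have c3: "red\<^sup>*\<^sup>* (xpow (i) @ [yp] @ xpow (-(i)-1) @ [ylet (-e)] @ [ylet (e)] @ xpow (i+1) @ v) (xpow (i) @ [yp] @ xpow (-(i)-1) @ xpow (i+1) @ v)"
    by (rule conv[OF Sf[of "-e" "xpow (i) @ [yp] @ xpow (-(i)-1)" "xpow (i+1) @ v"]]) (use assms in \<open>auto simp: algebra_simps\<close>)
  have c4: "red\<^sup>*\<^sup>* (xpow (i) @ [yp] @ xpow (-(i)-1) @ xpow (i+1) @ v) (xpow (i) @ [yp] @ v)"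
    by (rule conv[OF Sx[of "-(i)-1" "i+1" "0" "xpow (i) @ [yp]" "v"]]) (use assms in \<open>auto simp: algebra_simps\<close>)
  have a: "red\<^sup>*\<^sup>* (xpow (i) @ [yp] @ v) (xpow (i) @ [yp] @ v)" by simp
  have b: "red\<^sup>*\<^sup>* ([ylet (-e)] @ xpow (i) @ [yp] @ xpow (-(i)-1) @ [ylet (e)] @ xpow (i+1) @ v) (xpow (i) @ [yp] @ v)" by (rule conv[OF tr[OF c1 tr[OF c2 tr[OF c3 c4]]]]) simp_all
  show ?thesis by (rule JI[OF a b])
qed

lemma CP2:
  assumes "e \<in> {1,-1}" "i \<ge> 1"
  shows "J (xpow (i+1) @ [ym] @ v) ([ylet (-e)] @ xpow (i+1) @ [ym] @ xpow (-(i)) @ [ylet (e)] @ xpow (i) @ v)"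
proof -
  have c5: "red\<^sup>*\<^sup>* ([ylet (-e)] @ xpow (i+1) @ [ym] @ xpow (-(i)) @ [ylet (e)] @ xpow (i) @ v) (xpow (i+1) @ [ym] @ xpow (-(i)) @ [ylet (-e)] @ xpow (i) @ xpow (-(i)) @ [ylet (e)] @ xpow (i) @ v)"
    by (rule conv[OF Syi[of "-e" "i" "[]" "xpow (-(i)) @ [ylet (e)] @ xpow (i) @ v"]]) (use assms in \<open>auto simp: algebra_simps\<close>)
  have c6: "red\<^sup>*\<^sup>* (xpow (i+1) @ [ym] @ xpow (-(i)) @ [ylet (-e)] @ xpow (i) @ xpow (-(i)) @ [ylet (e)] @ xpow (i) @ v) (xpow (i+1) @ [ym] @ xpow (-(i)) @ [ylet (-e)] @ [ylet (e)] @ xpow (i) @ v)"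
    by (rule conv[OF Sx[of "i" "-(i)" "0" "xpow (i+1) @ [ym] @ xpow (-(i)) @ [ylet (-e)]" "[ylet (e)] @ xpow (i) @ v"]]) (use assms in \<open>auto simp: algebra_simps\<close>)
  have c7: "red\<^sup>*\<^sup>* (xpow (i+1) @ [ym] @ xpow (-(i)) @ [ylet (-e)] @ [ylet (e)] @ xpow (i) @ v) (xpow (i+1) @ [ym] @ xpow (-(i)) @ xpow (i) @ v)"
    by (rule conv[OF Sf[of "-e" "xpow (i+1) @ [ym] @ xpow (-(i))" "xpow (i) @ v"]]) (use assms in \<open>auto simp: algebra_simps\<close>)
  have c8: "red\<^sup>*\<^sup>* (xpow (i+1) @ [ym] @ xpow (-(i)) @ xpow (i) @ v) (xpow (i+1) @ [ym] @ v)"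
    by (rule conv[OF Sx[of "-(i)" "i" "0" "xpow (i+1) @ [ym]" "v"]]) (use assms in \<open>auto simp: algebra_simps\<close>)
  have a: "red\<^sup>*\<^sup>* (xpow (i+1) @ [ym] @ v) (xpow (i+1) @ [ym] @ v)" by simp
  have b: "red\<^sup>*\<^sup>* ([ylet (-e)] @ xpow (i+1) @ [ym] @ xpow (-(i)) @ [ylet (e)] @ xpow (i) @ v) (xpow (i+1) @ [ym] @ v)" by (rule conv[OF tr[OF c5 tr[OF c6 tr[OF c7 c8]]]]) simp_all
  show ?thesis by (rule JI[OF a b])
qed

lemma CP3:
  assumes "e \<in> {1,-1}" "i \<ge> 1"
  shows "J (xpow (i) @ [yp] @ xpow (-(i)-1) @ [ylet (e)] @ xpow (i+1) @ [ym] @ v) ([ylet (e)] @ xpow (i) @ v)"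
proof -
  have c9: "red\<^sup>*\<^sup>* (xpow (i) @ [yp] @ xpow (-(i)-1) @ [ylet (e)] @ xpow (i+1) @ [ym] @ v) (xpow (i) @ [yp] @ xpow (-(i)-1) @ xpow (i+1) @ [ym] @ xpow (-(i)) @ [ylet (e)] @ xpow (i) @ v)"
    by (rule conv[OF Syi[of "e" "i" "xpow (i) @ [yp] @ xpow (-(i)-1)" "v"]]) (use assms in \<open>auto simp: algebra_simps\<close>)
  have c10: "red\<^sup>*\<^sup>* (xpow (i) @ [yp] @ xpow (-(i)-1) @ xpow (i+1) @ [ym] @ xpow (-(i)) @ [ylet (e)] @ xpow (i) @ v) (xpow (i) @ [yp] @ [ym] @ xpow (-(i)) @ [ylet (e)] @ xpow (i) @ v)"
    by (rule conv[OF Sx[of "-(i)-1" "i+1" "0" "xpow (i) @ [yp]" "[ym] @ xpow (-(i)) @ [ylet (e)] @ xpow (i) @ v"]]) (use assms in \<open>auto simp: algebra_simps\<close>)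
  have c11: "red\<^sup>*\<^sup>* (xpow (i) @ [yp] @ [ym] @ xpow (-(i)) @ [ylet (e)] @ xpow (i) @ v) (xpow (i) @ xpow (-(i)) @ [ylet (e)] @ xpow (i) @ v)"
    by (rule conv[OF Sf[of "1" "xpow (i)" "xpow (-(i)) @ [ylet (e)] @ xpow (i) @ v"]]) (use assms in \<open>auto simp: algebra_simps\<close>)
  have c12: "red\<^sup>*\<^sup>* (xpow (i) @ xpow (-(i)) @ [ylet (e)] @ xpow (i) @ v) ([ylet (e)] @ xpow (i) @ v)"
    by (rule conv[OF Sx[of "i" "-(i)" "0" "[]" "[ylet (e)] @ xpow (i) @ v"]]) (use assms in \<open>auto simp: algebra_simps\<close>)
  have a: "red\<^sup>*\<^sup>* (xpow (i) @ [yp] @ xpow (-(i)-1) @ [ylet (e)] @ xpow (i+1) @ [ym] @ v) ([ylet (e)] @ xpow (i) @ v)" by (rule tr[OF c9 tr[OF c10 tr[OF c11 c12]]])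
  have b: "red\<^sup>*\<^sup>* ([ylet (e)] @ xpow (i) @ v) ([ylet (e)] @ xpow (i) @ v)" by simp
  show ?thesis by (rule JI[OF a b])
qed

lemma CP4:
  assumes "e \<in> {1,-1}" "i \<ge> 1" "j \<ge> 1"
  shows "J (xpow (i) @ [yp] @ xpow (-(i)-1) @ [ylet (e)] @ xpow (i+1) @ xpow (j) @ [yp] @ v) ([ylet (e)] @ xpow (i) @ xpow (j) @ [yp] @ xpow (-(j)-1) @ [ylet (1)] @ xpow (j+1) @ v)"
proof -
  have c13: "red\<^sup>*\<^sup>* (xpow (i) @ [yp] @ xpow (-(i)-1) @ [ylet (e)] @ xpow (i+1) @ xpow (j) @ [yp] @ v) (xpow (i) @ [yp] @ xpow (-(i)-1) @ [ylet (e)] @ xpow (i+j+1) @ [yp] @ v)"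
    by (rule conv[OF Sx[of "i+1" "j" "i+j+1" "xpow (i) @ [yp] @ xpow (-(i)-1) @ [ylet (e)]" "[yp] @ v"]]) (use assms in \<open>auto simp: algebra_simps\<close>)
  have c14: "red\<^sup>*\<^sup>* (xpow (i) @ [yp] @ xpow (-(i)-1) @ [ylet (e)] @ xpow (i+j+1) @ [yp] @ v) (xpow (i) @ [yp] @ xpow (-(i)-1) @ xpow (i+j+1) @ [yp] @ xpow (-(i+j+1)-1) @ [ylet (e)] @ xpow (i+j+1+1) @ v)"
    by (rule conv[OF Sy[of "e" "i+j+1" "xpow (i) @ [yp] @ xpow (-(i)-1)" "v"]]) (use assms in \<open>auto simp: algebra_simps\<close>)
  have c15: "red\<^sup>*\<^sup>* (xpow (i) @ [yp] @ xpow (-(i)-1) @ xpow (i+j+1) @ [yp] @ xpow (-(i+j+1)-1) @ [ylet (e)] @ xpow (i+j+1+1) @ v) (xpow (i) @ [yp] @ xpow (j) @ [yp] @ xpow (-(i+j+1)-1) @ [ylet (e)] @ xpow (i+j+1+1) @ v)"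
    by (rule conv[OF Sx[of "-(i)-1" "i+j+1" "j" "xpow (i) @ [yp]" "[yp] @ xpow (-(i+j+1)-1) @ [ylet (e)] @ xpow (i+j+1+1) @ v"]]) (use assms in \<open>auto simp: algebra_simps\<close>)
  have c16: "red\<^sup>*\<^sup>* (xpow (i) @ [yp] @ xpow (j) @ [yp] @ xpow (-(i+j+1)-1) @ [ylet (e)] @ xpow (i+j+1+1) @ v) (xpow (i) @ xpow (j) @ [yp] @ xpow (-(j)-1) @ [ylet (1)] @ xpow (j+1) @ xpow (-(i+j+1)-1) @ [ylet (e)] @ xpow (i+j+1+1) @ v)"
    by (rule conv[OF Sy[of "1" "j" "xpow (i)" "xpow (-(i+j+1)-1) @ [ylet (e)] @ xpow (i+j+1+1) @ v"]]) (use assms in \<open>auto simp: algebra_simps\<close>)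
  have c17: "red\<^sup>*\<^sup>* (xpow (i) @ xpow (j) @ [yp] @ xpow (-(j)-1) @ [ylet (1)] @ xpow (j+1) @ xpow (-(i+j+1)-1) @ [ylet (e)] @ xpow (i+j+1+1) @ v) (xpow (i+j) @ [yp] @ xpow (-(j)-1) @ [ylet (1)] @ xpow (j+1) @ xpow (-(i+j+1)-1) @ [ylet (e)] @ xpow (i+j+1+1) @ v)"
    by (rule conv[OF Sx[of "i" "j" "i+j" "[]" "[yp] @ xpow (-(j)-1) @ [ylet (1)] @ xpow (j+1) @ xpow (-(i+j+1)-1) @ [ylet (e)] @ xpow (i+j+1+1) @ v"]]) (use assms in \<open>auto simp: algebra_simps\<close>)
  have c18: "red\<^sup>*\<^sup>* (xpow (i+j) @ [yp] @ xpow (-(j)-1) @ [ylet (1)] @ xpow (j+1) @ xpow (-(i+j+1)-1) @ [ylet (e)] @ xpow (i+j+1+1) @ v) (xpow (i+j) @ [yp] @ xpow (-(j)-1) @ [ylet (1)] @ xpow (-(i)-1) @ [ylet (e)] @ xpow (i+j+1+1) @ v)"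
    by (rule conv[OF Sx[of "j+1" "-(i+j+1)-1" "-(i)-1" "xpow (i+j) @ [yp] @ xpow (-(j)-1) @ [ylet (1)]" "[ylet (e)] @ xpow (i+j+1+1) @ v"]]) (use assms in \<open>auto simp: algebra_simps\<close>)
  have c19: "red\<^sup>*\<^sup>* ([ylet (e)] @ xpow (i) @ xpow (j) @ [yp] @ xpow (-(j)-1) @ [ylet (1)] @ xpow (j+1) @ v) ([ylet (e)] @ xpow (i+j) @ [yp] @ xpow (-(j)-1) @ [ylet (1)] @ xpow (j+1) @ v)"
    by (rule conv[OF Sx[of "i" "j" "i+j" "[ylet (e)]" "[yp] @ xpow (-(j)-1) @ [ylet (1)] @ xpow (j+1) @ v"]]) (use assms in \<open>auto simp: algebra_simps\<close>)
  have c20: "red\<^sup>*\<^sup>* ([ylet (e)] @ xpow (i+j) @ [yp] @ xpow (-(j)-1) @ [ylet (1)] @ xpow (j+1) @ v) (xpow (i+j) @ [yp] @ xpow (-(i+j)-1) @ [ylet (e)] @ xpow (i+j+1) @ xpow (-(j)-1) @ [ylet (1)] @ xpow (j+1) @ v)"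
    by (rule conv[OF Sy[of "e" "i+j" "[]" "xpow (-(j)-1) @ [ylet (1)] @ xpow (j+1) @ v"]]) (use assms in \<open>auto simp: algebra_simps\<close>)
  have c21: "red\<^sup>*\<^sup>* (xpow (i+j) @ [yp] @ xpow (-(i+j)-1) @ [ylet (e)] @ xpow (i+j+1) @ xpow (-(j)-1) @ [ylet (1)] @ xpow (j+1) @ v) (xpow (i+j) @ [yp] @ xpow (-(i+j)-1) @ [ylet (e)] @ xpow (i) @ [ylet (1)] @ xpow (j+1) @ v)"
    by (rule conv[OF Sx[of "i+j+1" "-(j)-1" "i" "xpow (i+j) @ [yp] @ xpow (-(i+j)-1) @ [ylet (e)]" "[ylet (1)] @ xpow (j+1) @ v"]]) (use assms in \<open>auto simp: algebra_simps\<close>)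
  have c22: "red\<^sup>*\<^sup>* (xpow (i+j) @ [yp] @ xpow (-(i+j)-1) @ [ylet (e)] @ xpow (i) @ [ylet (1)] @ xpow (j+1) @ v) (xpow (i+j) @ [yp] @ xpow (-(i+j)-1) @ xpow (i) @ [yp] @ xpow (-(i)-1) @ [ylet (e)] @ xpow (i+1) @ xpow (j+1) @ v)"
    by (rule conv[OF Sy[of "e" "i" "xpow (i+j) @ [yp] @ xpow (-(i+j)-1)" "xpow (j+1) @ v"]]) (use assms in \<open>auto simp: algebra_simps\<close>)
  have c23: "red\<^sup>*\<^sup>* (xpow (i+j) @ [yp] @ xpow (-(i+j)-1) @ xpow (i) @ [yp] @ xpow (-(i)-1) @ [ylet (e)] @ xpow (i+1) @ xpow (j+1) @ v) (xpow (i+j) @ [yp] @ xpow (-(j)-1) @ [yp] @ xpow (-(i)-1) @ [ylet (e)] @ xpow (i+1) @ xpow (j+1) @ v)"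
    by (rule conv[OF Sx[of "-(i+j)-1" "i" "-(j)-1" "xpow (i+j) @ [yp]" "[yp] @ xpow (-(i)-1) @ [ylet (e)] @ xpow (i+1) @ xpow (j+1) @ v"]]) (use assms in \<open>auto simp: algebra_simps\<close>)
  have c24: "red\<^sup>*\<^sup>* (xpow (i+j) @ [yp] @ xpow (-(j)-1) @ [yp] @ xpow (-(i)-1) @ [ylet (e)] @ xpow (i+1) @ xpow (j+1) @ v) (xpow (i+j) @ [yp] @ xpow (-(j)-1) @ [yp] @ xpow (-(i)-1) @ [ylet (e)] @ xpow (i+j+1+1) @ v)"
    by (rule conv[OF Sx[of "i+1" "j+1" "i+j+1+1" "xpow (i+j) @ [yp] @ xpow (-(j)-1) @ [yp] @ xpow (-(i)-1) @ [ylet (e)]" "v"]]) (use assms in \<open>auto simp: algebra_simps\<close>)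
  have a: "red\<^sup>*\<^sup>* (xpow (i) @ [yp] @ xpow (-(i)-1) @ [ylet (e)] @ xpow (i+1) @ xpow (j) @ [yp] @ v) (xpow (i+j) @ [yp] @ xpow (-(j)-1) @ [ylet (1)] @ xpow (-(i)-1) @ [ylet (e)] @ xpow (i+j+1+1) @ v)" by (rule tr[OF c13 tr[OF c14 tr[OF c15 tr[OF c16 tr[OF c17 c18]]]]])
  have b: "red\<^sup>*\<^sup>* ([ylet (e)] @ xpow (i) @ xpow (j) @ [yp] @ xpow (-(j)-1) @ [ylet (1)] @ xpow (j+1) @ v) (xpow (i+j) @ [yp] @ xpow (-(j)-1) @ [ylet (1)] @ xpow (-(i)-1) @ [ylet (e)] @ xpow (i+j+1+1) @ v)" by (rule conv[OF tr[OF c19 tr[OF c20 tr[OF c21 tr[OF c22 tr[OF c23 c24]]]]]]) simp_all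
  show ?thesis by (rule JI[OF a b])
qed

lemma CP5:
  assumes "e \<in> {1,-1}" "i \<ge> 1" "j \<ge> 1"
  shows "J (xpow (i) @ [yp] @ xpow (-(i)-1) @ [ylet (e)] @ xpow (i+1) @ xpow (j+1) @ [ym] @ v) ([ylet (e)] @ xpow (i) @ xpow (j+1) @ [ym] @ xpow (-(j)) @ [ylet (1)] @ xpow (j) @ v)"
proof -
  have c25: "red\<^sup>*\<^sup>* (xpow (i) @ [yp] @ xpow (-(i)-1) @ [ylet (e)] @ xpow (i+1) @ xpow (j+1) @ [ym] @ v) (xpow (i) @ [yp] @ xpow (-(i)-1) @ [ylet (e)] @ xpow (i+j+1+1) @ [ym] @ v)"
    by (rule conv[OF Sx[of "i+1" "j+1" "i+j+1+1" "xpow (i) @ [yp] @ xpow (-(i)-1) @ [ylet (e)]" "[ym] @ v"]]) (use assms in \<open>auto simp: algebra_simps\<close>)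
  have c26: "red\<^sup>*\<^sup>* (xpow (i) @ [yp] @ xpow (-(i)-1) @ [ylet (e)] @ xpow (i+j+1+1) @ [ym] @ v) (xpow (i) @ [yp] @ xpow (-(i)-1) @ xpow (i+j+1+1) @ [ym] @ xpow (-(i+j+1)) @ [ylet (e)] @ xpow (i+j+1) @ v)"
    by (rule conv[OF Syi[of "e" "i+j+1" "xpow (i) @ [yp] @ xpow (-(i)-1)" "v"]]) (use assms in \<open>auto simp: algebra_simps\<close>)
  have c27: "red\<^sup>*\<^sup>* (xpow (i) @ [yp] @ xpow (-(i)-1) @ xpow (i+j+1+1) @ [ym] @ xpow (-(i+j+1)) @ [ylet (e)] @ xpow (i+j+1) @ v) (xpow (i) @ [yp] @ xpow (j+1) @ [ym] @ xpow (-(i+j+1)) @ [ylet (e)] @ xpow (i+j+1) @ v)"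
    by (rule conv[OF Sx[of "-(i)-1" "i+j+1+1" "j+1" "xpow (i) @ [yp]" "[ym] @ xpow (-(i+j+1)) @ [ylet (e)] @ xpow (i+j+1) @ v"]]) (use assms in \<open>auto simp: algebra_simps\<close>)
  have c28: "red\<^sup>*\<^sup>* (xpow (i) @ [yp] @ xpow (j+1) @ [ym] @ xpow (-(i+j+1)) @ [ylet (e)] @ xpow (i+j+1) @ v) (xpow (i) @ xpow (j+1) @ [ym] @ xpow (-(j)) @ [ylet (1)] @ xpow (j) @ xpow (-(i+j+1)) @ [ylet (e)] @ xpow (i+j+1) @ v)"
    by (rule conv[OF Syi[of "1" "j" "xpow (i)" "xpow (-(i+j+1)) @ [ylet (e)] @ xpow (i+j+1) @ v"]]) (use assms in \<open>auto simp: algebra_simps\<close>)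
  have c29: "red\<^sup>*\<^sup>* (xpow (i) @ xpow (j+1) @ [ym] @ xpow (-(j)) @ [ylet (1)] @ xpow (j) @ xpow (-(i+j+1)) @ [ylet (e)] @ xpow (i+j+1) @ v) (xpow (i+j+1) @ [ym] @ xpow (-(j)) @ [ylet (1)] @ xpow (j) @ xpow (-(i+j+1)) @ [ylet (e)] @ xpow (i+j+1) @ v)"
    by (rule conv[OF Sx[of "i" "j+1" "i+j+1" "[]" "[ym] @ xpow (-(j)) @ [ylet (1)] @ xpow (j) @ xpow (-(i+j+1)) @ [ylet (e)] @ xpow (i+j+1) @ v"]]) (use assms in \<open>auto simp: algebra_simps\<close>)
  have c30: "red\<^sup>*\<^sup>* (xpow (i+j+1) @ [ym] @ xpow (-(j)) @ [ylet (1)] @ xpow (j) @ xpow (-(i+j+1)) @ [ylet (e)] @ xpow (i+j+1) @ v) (xpow (i+j+1) @ [ym] @ xpow (-(j)) @ [ylet (1)] @ xpow (-(i)-1) @ [ylet (e)] @ xpow (i+j+1) @ v)"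
    by (rule conv[OF Sx[of "j" "-(i+j+1)" "-(i)-1" "xpow (i+j+1) @ [ym] @ xpow (-(j)) @ [ylet (1)]" "[ylet (e)] @ xpow (i+j+1) @ v"]]) (use assms in \<open>auto simp: algebra_simps\<close>)
  have c31: "red\<^sup>*\<^sup>* ([ylet (e)] @ xpow (i) @ xpow (j+1) @ [ym] @ xpow (-(j)) @ [ylet (1)] @ xpow (j) @ v) ([ylet (e)] @ xpow (i+j+1) @ [ym] @ xpow (-(j)) @ [ylet (1)] @ xpow (j) @ v)"
    by (rule conv[OF Sx[of "i" "j+1" "i+j+1" "[ylet (e)]" "[ym] @ xpow (-(j)) @ [ylet (1)] @ xpow (j) @ v"]]) (use assms in \<open>auto simp: algebra_simps\<close>)
  have c32: "red\<^sup>*\<^sup>* ([ylet (e)] @ xpow (i+j+1) @ [ym] @ xpow (-(j)) @ [ylet (1)] @ xpow (j) @ v) (xpow (i+j+1) @ [ym] @ xpow (-(i+j)) @ [ylet (e)] @ xpow (i+j) @ xpow (-(j)) @ [ylet (1)] @ xpow (j) @ v)"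
    by (rule conv[OF Syi[of "e" "i+j" "[]" "xpow (-(j)) @ [ylet (1)] @ xpow (j) @ v"]]) (use assms in \<open>auto simp: algebra_simps\<close>)
  have c33: "red\<^sup>*\<^sup>* (xpow (i+j+1) @ [ym] @ xpow (-(i+j)) @ [ylet (e)] @ xpow (i+j) @ xpow (-(j)) @ [ylet (1)] @ xpow (j) @ v) (xpow (i+j+1) @ [ym] @ xpow (-(i+j)) @ [ylet (e)] @ xpow (i) @ [ylet (1)] @ xpow (j) @ v)"
    by (rule conv[OF Sx[of "i+j" "-(j)" "i" "xpow (i+j+1) @ [ym] @ xpow (-(i+j)) @ [ylet (e)]" "[ylet (1)] @ xpow (j) @ v"]]) (use assms in \<open>auto simp: algebra_simps\<close>)
  have c34: "red\<^sup>*\<^sup>* (xpow (i+j+1) @ [ym] @ xpow (-(i+j)) @ [ylet (e)] @ xpow (i) @ [ylet (1)] @ xpow (j) @ v) (xpow (i+j+1) @ [ym] @ xpow (-(i+j)) @ xpow (i) @ [yp] @ xpow (-(i)-1) @ [ylet (e)] @ xpow (i+1) @ xpow (j) @ v)"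
    by (rule conv[OF Sy[of "e" "i" "xpow (i+j+1) @ [ym] @ xpow (-(i+j))" "xpow (j) @ v"]]) (use assms in \<open>auto simp: algebra_simps\<close>)
  have c35: "red\<^sup>*\<^sup>* (xpow (i+j+1) @ [ym] @ xpow (-(i+j)) @ xpow (i) @ [yp] @ xpow (-(i)-1) @ [ylet (e)] @ xpow (i+1) @ xpow (j) @ v) (xpow (i+j+1) @ [ym] @ xpow (-(j)) @ [yp] @ xpow (-(i)-1) @ [ylet (e)] @ xpow (i+1) @ xpow (j) @ v)"
    by (rule conv[OF Sx[of "-(i+j)" "i" "-(j)" "xpow (i+j+1) @ [ym]" "[yp] @ xpow (-(i)-1) @ [ylet (e)] @ xpow (i+1) @ xpow (j) @ v"]]) (use assms in \<open>auto simp: algebra_simps\<close>)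
  have c36: "red\<^sup>*\<^sup>* (xpow (i+j+1) @ [ym] @ xpow (-(j)) @ [yp] @ xpow (-(i)-1) @ [ylet (e)] @ xpow (i+1) @ xpow (j) @ v) (xpow (i+j+1) @ [ym] @ xpow (-(j)) @ [yp] @ xpow (-(i)-1) @ [ylet (e)] @ xpow (i+j+1) @ v)"
    by (rule conv[OF Sx[of "i+1" "j" "i+j+1" "xpow (i+j+1) @ [ym] @ xpow (-(j)) @ [yp] @ xpow (-(i)-1) @ [ylet (e)]" "v"]]) (use assms in \<open>auto simp: algebra_simps\<close>)
  have a: "red\<^sup>*\<^sup>* (xpow (i) @ [yp] @ xpow (-(i)-1) @ [ylet (e)] @ xpow (i+1) @ xpow (j+1) @ [ym] @ v) (xpow (i+j+1) @ [ym] @ xpow (-(j)) @ [ylet (1)] @ xpow (-(i)-1) @ [ylet (e)] @ xpow (i+j+1) @ v)" by (rule tr[OF c25 tr[OF c26 tr[OF c27 tr[OF c28 tr[OF c29 c30]]]]])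
  have b: "red\<^sup>*\<^sup>* ([ylet (e)] @ xpow (i) @ xpow (j+1) @ [ym] @ xpow (-(j)) @ [ylet (1)] @ xpow (j) @ v) (xpow (i+j+1) @ [ym] @ xpow (-(j)) @ [ylet (1)] @ xpow (-(i)-1) @ [ylet (e)] @ xpow (i+j+1) @ v)" by (rule conv[OF tr[OF c31 tr[OF c32 tr[OF c33 tr[OF c34 tr[OF c35 c36]]]]]]) simp_all
  show ?thesis by (rule JI[OF a b])
qed

lemma CP6:
  assumes "e \<in> {1,-1}" "i \<ge> 1"
  shows "J (xpow (i+1) @ [ym] @ xpow (-(i)) @ [ylet (e)] @ xpow (i) @ [yp] @ v) ([ylet (e)] @ xpow (i+1) @ v)"
proof -
  have c37: "red\<^sup>*\<^sup>* (xpow (i+1) @ [ym] @ xpow (-(i)) @ [ylet (e)] @ xpow (i) @ [yp] @ v) (xpow (i+1) @ [ym] @ xpow (-(i)) @ xpow (i) @ [yp] @ xpow (-(i)-1) @ [ylet (e)] @ xpow (i+1) @ v)"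
    by (rule conv[OF Sy[of "e" "i" "xpow (i+1) @ [ym] @ xpow (-(i))" "v"]]) (use assms in \<open>auto simp: algebra_simps\<close>)
  have c38: "red\<^sup>*\<^sup>* (xpow (i+1) @ [ym] @ xpow (-(i)) @ xpow (i) @ [yp] @ xpow (-(i)-1) @ [ylet (e)] @ xpow (i+1) @ v) (xpow (i+1) @ [ym] @ [yp] @ xpow (-(i)-1) @ [ylet (e)] @ xpow (i+1) @ v)"
    by (rule conv[OF Sx[of "-(i)" "i" "0" "xpow (i+1) @ [ym]" "[yp] @ xpow (-(i)-1) @ [ylet (e)] @ xpow (i+1) @ v"]]) (use assms in \<open>auto simp: algebra_simps\<close>)
  have c39: "red\<^sup>*\<^sup>* (xpow (i+1) @ [ym] @ [yp] @ xpow (-(i)-1) @ [ylet (e)] @ xpow (i+1) @ v) (xpow (i+1) @ xpow (-(i)-1) @ [ylet (e)] @ xpow (i+1) @ v)"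
    by (rule conv[OF Sf[of "-1" "xpow (i+1)" "xpow (-(i)-1) @ [ylet (e)] @ xpow (i+1) @ v"]]) (use assms in \<open>auto simp: algebra_simps\<close>)
  have c40: "red\<^sup>*\<^sup>* (xpow (i+1) @ xpow (-(i)-1) @ [ylet (e)] @ xpow (i+1) @ v) ([ylet (e)] @ xpow (i+1) @ v)"
    by (rule conv[OF Sx[of "i+1" "-(i)-1" "0" "[]" "[ylet (e)] @ xpow (i+1) @ v"]]) (use assms in \<open>auto simp: algebra_simps\<close>)
  have a: "red\<^sup>*\<^sup>* (xpow (i+1) @ [ym] @ xpow (-(i)) @ [ylet (e)] @ xpow (i) @ [yp] @ v) ([ylet (e)] @ xpow (i+1) @ v)" by (rule tr[OF c37 tr[OF c38 tr[OF c39 c40]]])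
  have b: "red\<^sup>*\<^sup>* ([ylet (e)] @ xpow (i+1) @ v) ([ylet (e)] @ xpow (i+1) @ v)" by simp
  show ?thesis by (rule JI[OF a b])
qed

lemma CP7:
  assumes "e \<in> {1,-1}" "i \<ge> 1" "j \<ge> 1"
  shows "J (xpow (i+1) @ [ym] @ xpow (-(i)) @ [ylet (e)] @ xpow (i) @ xpow (j) @ [yp] @ v) ([ylet (e)] @ xpow (i+1) @ xpow (j) @ [yp] @ xpow (-(j)-1) @ [ylet (-1)] @ xpow (j+1) @ v)"
proof -
  have c41: "red\<^sup>*\<^sup>* (xpow (i+1) @ [ym] @ xpow (-(i)) @ [ylet (e)] @ xpow (i) @ xpow (j) @ [yp] @ v) (xpow (i+1) @ [ym] @ xpow (-(i)) @ [ylet (e)] @ xpow (i+j) @ [yp] @ v)"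
    by (rule conv[OF Sx[of "i" "j" "i+j" "xpow (i+1) @ [ym] @ xpow (-(i)) @ [ylet (e)]" "[yp] @ v"]]) (use assms in \<open>auto simp: algebra_simps\<close>)
  have c42: "red\<^sup>*\<^sup>* (xpow (i+1) @ [ym] @ xpow (-(i)) @ [ylet (e)] @ xpow (i+j) @ [yp] @ v) (xpow (i+1) @ [ym] @ xpow (-(i)) @ xpow (i+j) @ [yp] @ xpow (-(i+j)-1) @ [ylet (e)] @ xpow (i+j+1) @ v)"
    by (rule conv[OF Sy[of "e" "i+j" "xpow (i+1) @ [ym] @ xpow (-(i))" "v"]]) (use assms in \<open>auto simp: algebra_simps\<close>)
  have c43: "red\<^sup>*\<^sup>* (xpow (i+1) @ [ym] @ xpow (-(i)) @ xpow (i+j) @ [yp] @ xpow (-(i+j)-1) @ [ylet (e)] @ xpow (i+j+1) @ v) (xpow (i+1) @ [ym] @ xpow (j) @ [yp] @ xpow (-(i+j)-1) @ [ylet (e)] @ xpow (i+j+1) @ v)"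
    by (rule conv[OF Sx[of "-(i)" "i+j" "j" "xpow (i+1) @ [ym]" "[yp] @ xpow (-(i+j)-1) @ [ylet (e)] @ xpow (i+j+1) @ v"]]) (use assms in \<open>auto simp: algebra_simps\<close>)
  have c44: "red\<^sup>*\<^sup>* (xpow (i+1) @ [ym] @ xpow (j) @ [yp] @ xpow (-(i+j)-1) @ [ylet (e)] @ xpow (i+j+1) @ v) (xpow (i+1) @ xpow (j) @ [yp] @ xpow (-(j)-1) @ [ylet (-1)] @ xpow (j+1) @ xpow (-(i+j)-1) @ [ylet (e)] @ xpow (i+j+1) @ v)"
    by (rule conv[OF Sy[of "-1" "j" "xpow (i+1)" "xpow (-(i+j)-1) @ [ylet (e)] @ xpow (i+j+1) @ v"]]) (use assms in \<open>auto simp: algebra_simps\<close>)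
  have c45: "red\<^sup>*\<^sup>* (xpow (i+1) @ xpow (j) @ [yp] @ xpow (-(j)-1) @ [ylet (-1)] @ xpow (j+1) @ xpow (-(i+j)-1) @ [ylet (e)] @ xpow (i+j+1) @ v) (xpow (i+j+1) @ [yp] @ xpow (-(j)-1) @ [ylet (-1)] @ xpow (j+1) @ xpow (-(i+j)-1) @ [ylet (e)] @ xpow (i+j+1) @ v)"
    by (rule conv[OF Sx[of "i+1" "j" "i+j+1" "[]" "[yp] @ xpow (-(j)-1) @ [ylet (-1)] @ xpow (j+1) @ xpow (-(i+j)-1) @ [ylet (e)] @ xpow (i+j+1) @ v"]]) (use assms in \<open>auto simp: algebra_simps\<close>)
  have c46: "red\<^sup>*\<^sup>* (xpow (i+j+1) @ [yp] @ xpow (-(j)-1) @ [ylet (-1)] @ xpow (j+1) @ xpow (-(i+j)-1) @ [ylet (e)] @ xpow (i+j+1) @ v) (xpow (i+j+1) @ [yp] @ xpow (-(j)-1) @ [ylet (-1)] @ xpow (-(i)) @ [ylet (e)] @ xpow (i+j+1) @ v)"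
    by (rule conv[OF Sx[of "j+1" "-(i+j)-1" "-(i)" "xpow (i+j+1) @ [yp] @ xpow (-(j)-1) @ [ylet (-1)]" "[ylet (e)] @ xpow (i+j+1) @ v"]]) (use assms in \<open>auto simp: algebra_simps\<close>)
  have c47: "red\<^sup>*\<^sup>* ([ylet (e)] @ xpow (i+1) @ xpow (j) @ [yp] @ xpow (-(j)-1) @ [ylet (-1)] @ xpow (j+1) @ v) ([ylet (e)] @ xpow (i+j+1) @ [yp] @ xpow (-(j)-1) @ [ylet (-1)] @ xpow (j+1) @ v)"
    by (rule conv[OF Sx[of "i+1" "j" "i+j+1" "[ylet (e)]" "[yp] @ xpow (-(j)-1) @ [ylet (-1)] @ xpow (j+1) @ v"]]) (use assms in \<open>auto simp: algebra_simps\<close>)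
  have c48: "red\<^sup>*\<^sup>* ([ylet (e)] @ xpow (i+j+1) @ [yp] @ xpow (-(j)-1) @ [ylet (-1)] @ xpow (j+1) @ v) (xpow (i+j+1) @ [yp] @ xpow (-(i+j+1)-1) @ [ylet (e)] @ xpow (i+j+1+1) @ xpow (-(j)-1) @ [ylet (-1)] @ xpow (j+1) @ v)"
    by (rule conv[OF Sy[of "e" "i+j+1" "[]" "xpow (-(j)-1) @ [ylet (-1)] @ xpow (j+1) @ v"]]) (use assms in \<open>auto simp: algebra_simps\<close>)
  have c49: "red\<^sup>*\<^sup>* (xpow (i+j+1) @ [yp] @ xpow (-(i+j+1)-1) @ [ylet (e)] @ xpow (i+j+1+1) @ xpow (-(j)-1) @ [ylet (-1)] @ xpow (j+1) @ v) (xpow (i+j+1) @ [yp] @ xpow (-(i+j+1)-1) @ [ylet (e)] @ xpow (i+1) @ [ylet (-1)] @ xpow (j+1) @ v)"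
    by (rule conv[OF Sx[of "i+j+1+1" "-(j)-1" "i+1" "xpow (i+j+1) @ [yp] @ xpow (-(i+j+1)-1) @ [ylet (e)]" "[ylet (-1)] @ xpow (j+1) @ v"]]) (use assms in \<open>auto simp: algebra_simps\<close>)
  have c50: "red\<^sup>*\<^sup>* (xpow (i+j+1) @ [yp] @ xpow (-(i+j+1)-1) @ [ylet (e)] @ xpow (i+1) @ [ylet (-1)] @ xpow (j+1) @ v) (xpow (i+j+1) @ [yp] @ xpow (-(i+j+1)-1) @ xpow (i+1) @ [ym] @ xpow (-(i)) @ [ylet (e)] @ xpow (i) @ xpow (j+1) @ v)"
    by (rule conv[OF Syi[of "e" "i" "xpow (i+j+1) @ [yp] @ xpow (-(i+j+1)-1)" "xpow (j+1) @ v"]]) (use assms in \<open>auto simp: algebra_simps\<close>)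
  have c51: "red\<^sup>*\<^sup>* (xpow (i+j+1) @ [yp] @ xpow (-(i+j+1)-1) @ xpow (i+1) @ [ym] @ xpow (-(i)) @ [ylet (e)] @ xpow (i) @ xpow (j+1) @ v) (xpow (i+j+1) @ [yp] @ xpow (-(j)-1) @ [ym] @ xpow (-(i)) @ [ylet (e)] @ xpow (i) @ xpow (j+1) @ v)"
    by (rule conv[OF Sx[of "-(i+j+1)-1" "i+1" "-(j)-1" "xpow (i+j+1) @ [yp]" "[ym] @ xpow (-(i)) @ [ylet (e)] @ xpow (i) @ xpow (j+1) @ v"]]) (use assms in \<open>auto simp: algebra_simps\<close>)
  have c52: "red\<^sup>*\<^sup>* (xpow (i+j+1) @ [yp] @ xpow (-(j)-1) @ [ym] @ xpow (-(i)) @ [ylet (e)] @ xpow (i) @ xpow (j+1) @ v) (xpow (i+j+1) @ [yp] @ xpow (-(j)-1) @ [ym] @ xpow (-(i)) @ [ylet (e)] @ xpow (i+j+1) @ v)"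
    by (rule conv[OF Sx[of "i" "j+1" "i+j+1" "xpow (i+j+1) @ [yp] @ xpow (-(j)-1) @ [ym] @ xpow (-(i)) @ [ylet (e)]" "v"]]) (use assms in \<open>auto simp: algebra_simps\<close>)
  have a: "red\<^sup>*\<^sup>* (xpow (i+1) @ [ym] @ xpow (-(i)) @ [ylet (e)] @ xpow (i) @ xpow (j) @ [yp] @ v) (xpow (i+j+1) @ [yp] @ xpow (-(j)-1) @ [ylet (-1)] @ xpow (-(i)) @ [ylet (e)] @ xpow (i+j+1) @ v)" by (rule tr[OF c41 tr[OF c42 tr[OF c43 tr[OF c44 tr[OF c45 c46]]]]])
  have b: "red\<^sup>*\<^sup>* ([ylet (e)] @ xpow (i+1) @ xpow (j) @ [yp] @ xpow (-(j)-1) @ [ylet (-1)] @ xpow (j+1) @ v) (xpow (i+j+1) @ [yp] @ xpow (-(j)-1) @ [ylet (-1)] @ xpow (-(i)) @ [ylet (e)] @ xpow (i+j+1) @ v)" by (rule conv[OF tr[OF c47 tr[OF c48 tr[OF c49 tr[OF c50 tr[OF c51 c52]]]]]]) simp_all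
  show ?thesis by (rule JI[OF a b])
qed

lemma CP8:
  assumes "e \<in> {1,-1}" "i \<ge> 1" "j \<ge> 1"
  shows "J (xpow (i+1) @ [ym] @ xpow (-(i)) @ [ylet (e)] @ xpow (i) @ xpow (j+1) @ [ym] @ v) ([ylet (e)] @ xpow (i+1) @ xpow (j+1) @ [ym] @ xpow (-(j)) @ [ylet (-1)] @ xpow (j) @ v)"
proof -
  have c53: "red\<^sup>*\<^sup>* (xpow (i+1) @ [ym] @ xpow (-(i)) @ [ylet (e)] @ xpow (i) @ xpow (j+1) @ [ym] @ v) (xpow (i+1) @ [ym] @ xpow (-(i)) @ [ylet (e)] @ xpow (i+j+1) @ [ym] @ v)"
    by (rule conv[OF Sx[of "i" "j+1" "i+j+1" "xpow (i+1) @ [ym] @ xpow (-(i)) @ [ylet (e)]" "[ym] @ v"]]) (use assms in \<open>auto simp: algebra_simps\<close>)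
  have c54: "red\<^sup>*\<^sup>* (xpow (i+1) @ [ym] @ xpow (-(i)) @ [ylet (e)] @ xpow (i+j+1) @ [ym] @ v) (xpow (i+1) @ [ym] @ xpow (-(i)) @ xpow (i+j+1) @ [ym] @ xpow (-(i+j)) @ [ylet (e)] @ xpow (i+j) @ v)"
    by (rule conv[OF Syi[of "e" "i+j" "xpow (i+1) @ [ym] @ xpow (-(i))" "v"]]) (use assms in \<open>auto simp: algebra_simps\<close>)
  have c55: "red\<^sup>*\<^sup>* (xpow (i+1) @ [ym] @ xpow (-(i)) @ xpow (i+j+1) @ [ym] @ xpow (-(i+j)) @ [ylet (e)] @ xpow (i+j) @ v) (xpow (i+1) @ [ym] @ xpow (j+1) @ [ym] @ xpow (-(i+j)) @ [ylet (e)] @ xpow (i+j) @ v)"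
    by (rule conv[OF Sx[of "-(i)" "i+j+1" "j+1" "xpow (i+1) @ [ym]" "[ym] @ xpow (-(i+j)) @ [ylet (e)] @ xpow (i+j) @ v"]]) (use assms in \<open>auto simp: algebra_simps\<close>)
  have c56: "red\<^sup>*\<^sup>* (xpow (i+1) @ [ym] @ xpow (j+1) @ [ym] @ xpow (-(i+j)) @ [ylet (e)] @ xpow (i+j) @ v) (xpow (i+1) @ xpow (j+1) @ [ym] @ xpow (-(j)) @ [ylet (-1)] @ xpow (j) @ xpow (-(i+j)) @ [ylet (e)] @ xpow (i+j) @ v)"
    by (rule conv[OF Syi[of "-1" "j" "xpow (i+1)" "xpow (-(i+j)) @ [ylet (e)] @ xpow (i+j) @ v"]]) (use assms in \<open>auto simp: algebra_simps\<close>)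
  have c57: "red\<^sup>*\<^sup>* (xpow (i+1) @ xpow (j+1) @ [ym] @ xpow (-(j)) @ [ylet (-1)] @ xpow (j) @ xpow (-(i+j)) @ [ylet (e)] @ xpow (i+j) @ v) (xpow (i+j+1+1) @ [ym] @ xpow (-(j)) @ [ylet (-1)] @ xpow (j) @ xpow (-(i+j)) @ [ylet (e)] @ xpow (i+j) @ v)"
    by (rule conv[OF Sx[of "i+1" "j+1" "i+j+1+1" "[]" "[ym] @ xpow (-(j)) @ [ylet (-1)] @ xpow (j) @ xpow (-(i+j)) @ [ylet (e)] @ xpow (i+j) @ v"]]) (use assms in \<open>auto simp: algebra_simps\<close>)
  have c58: "red\<^sup>*\<^sup>* (xpow (i+j+1+1) @ [ym] @ xpow (-(j)) @ [ylet (-1)] @ xpow (j) @ xpow (-(i+j)) @ [ylet (e)] @ xpow (i+j) @ v) (xpow (i+j+1+1) @ [ym] @ xpow (-(j)) @ [ylet (-1)] @ xpow (-(i)) @ [ylet (e)] @ xpow (i+j) @ v)"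
    by (rule conv[OF Sx[of "j" "-(i+j)" "-(i)" "xpow (i+j+1+1) @ [ym] @ xpow (-(j)) @ [ylet (-1)]" "[ylet (e)] @ xpow (i+j) @ v"]]) (use assms in \<open>auto simp: algebra_simps\<close>)
  have c59: "red\<^sup>*\<^sup>* ([ylet (e)] @ xpow (i+1) @ xpow (j+1) @ [ym] @ xpow (-(j)) @ [ylet (-1)] @ xpow (j) @ v) ([ylet (e)] @ xpow (i+j+1+1) @ [ym] @ xpow (-(j)) @ [ylet (-1)] @ xpow (j) @ v)"
    by (rule conv[OF Sx[of "i+1" "j+1" "i+j+1+1" "[ylet (e)]" "[ym] @ xpow (-(j)) @ [ylet (-1)] @ xpow (j) @ v"]]) (use assms in \<open>auto simp: algebra_simps\<close>)
  have c60: "red\<^sup>*\<^sup>* ([ylet (e)] @ xpow (i+j+1+1) @ [ym] @ xpow (-(j)) @ [ylet (-1)] @ xpow (j) @ v) (xpow (i+j+1+1) @ [ym] @ xpow (-(i+j+1)) @ [ylet (e)] @ xpow (i+j+1) @ xpow (-(j)) @ [ylet (-1)] @ xpow (j) @ v)"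
    by (rule conv[OF Syi[of "e" "i+j+1" "[]" "xpow (-(j)) @ [ylet (-1)] @ xpow (j) @ v"]]) (use assms in \<open>auto simp: algebra_simps\<close>)
  have c61: "red\<^sup>*\<^sup>* (xpow (i+j+1+1) @ [ym] @ xpow (-(i+j+1)) @ [ylet (e)] @ xpow (i+j+1) @ xpow (-(j)) @ [ylet (-1)] @ xpow (j) @ v) (xpow (i+j+1+1) @ [ym] @ xpow (-(i+j+1)) @ [ylet (e)] @ xpow (i+1) @ [ylet (-1)] @ xpow (j) @ v)"
    by (rule conv[OF Sx[of "i+j+1" "-(j)" "i+1" "xpow (i+j+1+1) @ [ym] @ xpow (-(i+j+1)) @ [ylet (e)]" "[ylet (-1)] @ xpow (j) @ v"]]) (use assms in \<open>auto simp: algebra_simps\<close>)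
  have c62: "red\<^sup>*\<^sup>* (xpow (i+j+1+1) @ [ym] @ xpow (-(i+j+1)) @ [ylet (e)] @ xpow (i+1) @ [ylet (-1)] @ xpow (j) @ v) (xpow (i+j+1+1) @ [ym] @ xpow (-(i+j+1)) @ xpow (i+1) @ [ym] @ xpow (-(i)) @ [ylet (e)] @ xpow (i) @ xpow (j) @ v)"
    by (rule conv[OF Syi[of "e" "i" "xpow (i+j+1+1) @ [ym] @ xpow (-(i+j+1))" "xpow (j) @ v"]]) (use assms in \<open>auto simp: algebra_simps\<close>)
  have c63: "red\<^sup>*\<^sup>* (xpow (i+j+1+1) @ [ym] @ xpow (-(i+j+1)) @ xpow (i+1) @ [ym] @ xpow (-(i)) @ [ylet (e)] @ xpow (i) @ xpow (j) @ v) (xpow (i+j+1+1) @ [ym] @ xpow (-(j)) @ [ym] @ xpow (-(i)) @ [ylet (e)] @ xpow (i) @ xpow (j) @ v)"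
    by (rule conv[OF Sx[of "-(i+j+1)" "i+1" "-(j)" "xpow (i+j+1+1) @ [ym]" "[ym] @ xpow (-(i)) @ [ylet (e)] @ xpow (i) @ xpow (j) @ v"]]) (use assms in \<open>auto simp: algebra_simps\<close>)
  have c64: "red\<^sup>*\<^sup>* (xpow (i+j+1+1) @ [ym] @ xpow (-(j)) @ [ym] @ xpow (-(i)) @ [ylet (e)] @ xpow (i) @ xpow (j) @ v) (xpow (i+j+1+1) @ [ym] @ xpow (-(j)) @ [ym] @ xpow (-(i)) @ [ylet (e)] @ xpow (i+j) @ v)"
    by (rule conv[OF Sx[of "i" "j" "i+j" "xpow (i+j+1+1) @ [ym] @ xpow (-(j)) @ [ym] @ xpow (-(i)) @ [ylet (e)]" "v"]]) (use assms in \<open>auto simp: algebra_simps\<close>)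
  have a: "red\<^sup>*\<^sup>* (xpow (i+1) @ [ym] @ xpow (-(i)) @ [ylet (e)] @ xpow (i) @ xpow (j+1) @ [ym] @ v) (xpow (i+j+1+1) @ [ym] @ xpow (-(j)) @ [ylet (-1)] @ xpow (-(i)) @ [ylet (e)] @ xpow (i+j) @ v)" by (rule tr[OF c53 tr[OF c54 tr[OF c55 tr[OF c56 tr[OF c57 c58]]]]])
  have b: "red\<^sup>*\<^sup>* ([ylet (e)] @ xpow (i+1) @ xpow (j+1) @ [ym] @ xpow (-(j)) @ [ylet (-1)] @ xpow (j) @ v) (xpow (i+j+1+1) @ [ym] @ xpow (-(j)) @ [ylet (-1)] @ xpow (-(i)) @ [ylet (e)] @ xpow (i+j) @ v)" by (rule conv[OF tr[OF c59 tr[OF c60 tr[OF c61 tr[OF c62 tr[OF c63 c64]]]]]]) simp_all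
  show ?thesis by (rule JI[OF a b])
qed

definition Ry :: "int \<Rightarrow> int \<Rightarrow> letter list" where
  "Ry e i = xpow i @ [yp] @ xpow (-(i)-1) @ [ylet e] @ xpow (i+1)"
definition Ryi :: "int \<Rightarrow> int \<Rightarrow> letter list" where
  "Ryi e i = xpow (i+1) @ [ym] @ xpow (-(i)) @ [ylet e] @ xpow i"

definition rl :: "letter list \<Rightarrow> letter list \<Rightarrow> bool" where
  "rl l r \<longleftrightarrow> (\<exists>a. l = [a, linv a] \<and> r = []) \<or>
     (\<exists>e p. e \<in> {1,-1} \<and> l = ylet e # replicate (Suc p) xp @ [yp] \<and> r = Ry e (int p + 1)) \<or>
     (\<exists>e p. e \<in> {1,-1} \<and> l = ylet e # replicate (Suc (Suc p)) xp @ [ym] \<and> r = Ryi e (int p + 1))"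

lemma xpow_rep: "xpow (int p + 1) = replicate (Suc p) xp"
  by (simp add: xpow_def nat_add_distrib)
lemma xpow_rep2: "xpow (int p + 1 + 1) = replicate (Suc (Suc p)) xp"
  by (simp add: xpow_def nat_add_distrib)

lemma red_iff: "red w w' \<longleftrightarrow> (\<exists>u l r v. rl l r \<and> w = u @ l @ v \<and> w' = u @ r @ v)"
proof
  assume "red w w'"
  then obtain k where "rstep k w w'" by (auto simp: reduces1_def)
  then show "\<exists>u l r v. rl l r \<and> w = u @ l @ v \<and> w' = u @ r @ v"
  proof cases
    case (free u a v)
    have "rl [a, linv a] []" by (auto simp: rl_def)
    then show ?thesis using free by fastforce
  next
    case (yrule e i u v)
    define p where "p = nat (i - 1)"
    have ip: "i = int p + 1" using yrule p_def by simp
    have "rl ([ylet e] @ xpow i @ [yp]) (Ry e i)"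
      unfolding rl_def using yrule by (auto simp: ip xpow_rep)
    moreover have "w = u @ ([ylet e] @ xpow i @ [yp]) @ v \<and> w' = u @ Ry e i @ v" using yrule by (simp add: Ry_def)
    ultimately show ?thesis by blast
  next
    case (yinvrule e i u v)
    define p where "p = nat (i - 1)"
    have ip: "i = int p + 1" using yinvrule p_def by simp
    have r: "rl ([ylet e] @ xpow (int p + 1 + 1) @ [ym]) (Ryi e (int p + 1))"
      unfolding xpow_rep2 rl_def by (intro disjI2 exI[of _ e] exI[of _ p]) (use yinvrule in simp)
    have "rl ([ylet e] @ xpow (i+1) @ [ym]) (Ryi e i)" using r ip by simp
    moreover have "w = u @ ([ylet e] @ xpow (i+1) @ [ym]) @ v \<and> w' = u @ Ryi e i @ v" using yinvrule by (simp add: Ryi_def)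
    ultimately show ?thesis by blast
  qed
next
  assume "\<exists>u l r v. rl l r \<and> w = u @ l @ v \<and> w' = u @ r @ v"
  then obtain u l r v where h: "rl l r" "w = u @ l @ v" "w' = u @ r @ v" by blast
  from h(1) show "red w w'" unfolding rl_def
  proof (elim disjE exE conjE)
    fix a assume "l = [a, linv a]" "r = []"
    then show ?thesis using h rstep.free[of u a v] by (auto simp: reduces1_def)
  next
    fix e p assume a: "e \<in> {1,-1}" "l = ylet e # replicate (Suc p) xp @ [yp]" "r = Ry e (int p + 1)"
    have "rstep (YR (int p + 1)) (u @ [ylet e] @ xpow (int p + 1) @ [yp] @ v)
        (u @ xpow (int p + 1) @ [yp] @ xpow (- (int p + 1) - 1) @ [ylet e] @ xpow (int p + 1 + 1) @ v)"
      by (rule rstep.yrule) (use a in auto)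
    then show ?thesis using h a unfolding reduces1_def by (auto simp: xpow_rep Ry_def)
  next
    fix e p assume a: "e \<in> {1,-1}" "l = ylet e # replicate (Suc (Suc p)) xp @ [ym]" "r = Ryi e (int p + 1)"
    have st: "rstep (YinvR (int p + 1)) (u @ [ylet e] @ xpow (int p + 1 + 1) @ [ym] @ v) (u @ Ryi e (int p + 1) @ v)"
      using rstep.yinvrule[of e "int p + 1" u v] a unfolding Ryi_def by simp
    have "rstep (YinvR (int p + 1)) w w'" using st[unfolded xpow_rep2] h a by simp
    then show ?thesis unfolding reduces1_def by blast
  qed
qed

lemma rl_red: "rl l r \<Longrightarrow> red (u @ l @ v) (u @ r @ v)"
  using red_iff by blast

lemma red_ctx: "red a b \<Longrightarrow> red (p @ a @ q) (p @ b @ q)"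
  using rstep_ctx unfolding reduces1_def by blast

lemma reds_ctx: "red\<^sup>*\<^sup>* a b \<Longrightarrow> red\<^sup>*\<^sup>* (p @ a @ q) (p @ b @ q)"
  by (induction rule: rtranclp_induct) (auto intro: rtranclp.rtrancl_into_rtrancl red_ctx)

lemma J_ctx: "J a b \<Longrightarrow> J (p @ a @ q) (p @ b @ q)"
  unfolding J_def using reds_ctx by blast
lemma J_refl: "J a a" unfolding J_def by blast
lemma J_eq: "J a b \<Longrightarrow> a = a' \<Longrightarrow> b = b' \<Longrightarrow> J a' b'" by simp

lemma run: "replicate a xp @ c # v = replicate b xp @ d # v' \<Longrightarrow> c \<noteq> xp \<Longrightarrow> d \<noteq> xp \<Longrightarrow>
   a = b \<and> c = d \<and> v = v'"
proof (induction a arbitrary: b)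
  case 0 then show ?case by (cases b) auto
next
  case (Suc a) then show ?case by (cases b) auto
qed

lemma split3: "t @ us = c # replicate n x @ [d] \<Longrightarrow> us \<noteq> [] \<Longrightarrow>
   t = [] \<or> (\<exists>k<n. t = c # replicate k x \<and> us = replicate (n - k) x @ [d]) \<or> (t = c # replicate n x \<and> us = [d])"
proof (cases t)
  case Nil then show ?thesis by simp
next
  case (Cons c' t')
  assume eq: "t @ us = c # replicate n x @ [d]" and ne: "us \<noteq> []"
  then have c: "c' = c" and eq2: "t' @ us = replicate n x @ [d]" using Cons by auto
  from eq2 obtain zs where "(t' = replicate n x @ zs \<and> zs @ us = [d]) \<or> (t' @ zs = replicate n x \<and> us = zs @ [d])"
    using append_eq_append_conv2[of t' us "replicate n x" "[d]"] by auto
  then show ?thesis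
  proof
    assume a: "t' = replicate n x @ zs \<and> zs @ us = [d]"
    then have "zs = []" "us = [d]" using ne by (cases zs; auto)+
    then show ?thesis using a Cons c by auto
  next
    assume a: "t' @ zs = replicate n x \<and> us = zs @ [d]"
    then have "\<forall>y\<in>set t'. y = x" "\<forall>y\<in>set zs. y = x" by (metis Un_iff in_set_replicate set_append)+
    then have t': "t' = replicate (length t') x" and zs: "zs = replicate (length zs) x"
      by (simp_all add: replicate_length_same)
    have len: "length t' + length zs = n" using a by (metis length_append length_replicate)
    show ?thesis
    proof (cases "length t' < n")
      case True then show ?thesis using a Cons c len t' zs
        by (intro disjI2 disjI1 exI[of _ "length t'"]) (metis add_diff_cancel_left')
    next
      case False then have "length zs = 0" using len by linarith
      then have "zs = []" by simp
      then show ?thesis using a Cons c t' len by auto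
    qed
  qed
qed

lemma linv_linv[simp]: "linv (linv a) = a" by (cases a) auto
lemma linv_ylet_ne[simp]: "linv (ylet e) \<noteq> xp" "linv (ylet e) \<noteq> xm" "xp \<noteq> linv (ylet e)" "xm \<noteq> linv (ylet e)" by (auto simp: ylet_def)
lemma ylet_yp: "e \<in> {1,-1} \<Longrightarrow> ylet e = yp \<Longrightarrow> e = 1" by (auto simp: ylet_def)
lemma ylet_ym: "e \<in> {1,-1} \<Longrightarrow> ylet e = ym \<Longrightarrow> e = -1" by (auto simp: ylet_def)
lemma ylet_inj: "e \<in> {1,-1} \<Longrightarrow> e' \<in> {1,-1} \<Longrightarrow> ylet e = ylet e' \<Longrightarrow> e = e'" by (auto simp: ylet_def)
lemma xpow_rep2': "xpow (2 + int p) = replicate (Suc (Suc p)) xp"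
  by (simp add: xpow_def nat_add_distrib)
lemma J_sym: "J a b \<Longrightarrow> J b a" unfolding J_def by blast

lemma rl_cases:
  assumes "rl l r"
  obtains (F) a where "l = [a, linv a]" "r = []"
  | (Y) e p where "e \<in> {1,-1}" "l = ylet e # replicate (Suc p) xp @ [yp]" "r = Ry e (int p + 1)"
  | (Yi) e p where "e \<in> {1,-1}" "l = ylet e # replicate (Suc (Suc p)) xp @ [ym]" "r = Ryi e (int p + 1)"
  using assms unfolding rl_def by blast

lemma ovF:
  assumes "us \<noteq> []" "[a, linv a] = t @ us" "us @ v1 = l2 @ v2" "rl l2 r2"
  shows "J v1 (t @ r2 @ v2)"
proof -
  have "(t = [] \<and> us = [a, linv a]) \<or> (t = [a] \<and> us = [linv a])"
    using assms(1,2) by (cases t; cases us; auto simp: Cons_eq_append_conv)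
  then show ?thesis
  proof
    assume h: "t = [] \<and> us = [a, linv a]"
    from assms(4) show ?thesis
    proof (cases rule: rl_cases)
      case (F b) then show ?thesis using h assms(3) by (auto intro: J_refl)
    next
      case (Y e p) then show ?thesis using h assms(3) by auto
    next
      case (Yi e p) then show ?thesis using h assms(3) by auto
    qed
  next
    assume h: "t = [a] \<and> us = [linv a]"
    from assms(4) show ?thesis
    proof (cases rule: rl_cases)
      case (F b) then show ?thesis using h assms(3) by (auto intro: J_refl)
    next
      case (Y e p)
      then have la: "linv a = ylet e" and a2: "v1 = replicate (Suc p) xp @ [yp] @ v2" using h assms(3) by auto
      have "a = ylet (-e)" using la linv_ylet[of e] Y(1) by (metis linv_linv)
      note a = this a2
      show ?thesis using CP1[of e "int p + 1" v2] Y h a by (simp add: Ry_def xpow_rep)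
    next
      case (Yi e p)
      then have la: "linv a = ylet e" and a2: "v1 = replicate (Suc (Suc p)) xp @ [ym] @ v2" using h assms(3) by auto
      have "a = ylet (-e)" using la linv_ylet[of e] Yi(1) by (metis linv_linv)
      note a = this a2
      show ?thesis using CP2[of e "int p + 1" v2] Yi h a by (simp add: Ryi_def xpow_rep xpow_rep2')
    qed
  qed
qed

lemma ovY:
  assumes e: "e \<in> {1,-1}" and ne: "us \<noteq> []" and l1: "ylet e # replicate (Suc p) xp @ [yp] = t @ us"
    and eq: "us @ v1 = l2 @ v2" and r2: "rl l2 r2"
  shows "J (Ry e (int p + 1) @ v1) (t @ r2 @ v2)"
proof -
  from split3[OF l1[symmetric] ne] consider
      (A) "t = []"
    | (B) k where "k < Suc p" "t = ylet e # replicate k xp" "us = replicate (Suc p - k) xp @ [yp]"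
    | (C) "t = ylet e # replicate (Suc p) xp" "us = [yp]" by blast
  then show ?thesis
  proof cases
    case A
    then have eq': "ylet e # replicate (Suc p) xp @ yp # v1 = l2 @ v2" using l1[symmetric] eq A by simp
    from r2 show ?thesis
    proof (cases rule: rl_cases)
      case (F b) then show ?thesis using eq' by auto
    next
      case (Y e' q)
      then have "ylet e = ylet e'" "replicate (Suc p) xp @ yp # v1 = replicate (Suc q) xp @ yp # v2"
        using eq' by auto
      then have "e = e'" "p = q" "v1 = v2" using run[of "Suc p" yp v1 "Suc q" yp v2] ylet_inj[OF e Y(1)] by auto
      then show ?thesis using A Y by (auto intro: J_refl)
    next
      case (Yi e' q)
      then have "replicate (Suc p) xp @ yp # v1 = replicate (Suc (Suc q)) xp @ ym # v2"
        using eq' by auto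
      then show ?thesis using run[of "Suc p" yp v1 "Suc (Suc q)" ym v2] by auto
    qed
  next
    case B
    then obtain m where m: "Suc p - k = Suc m" by (metis Suc_diff_Suc)
    then have eq': "xp # replicate m xp @ yp # v1 = l2 @ v2" using B eq by simp
    from r2 show ?thesis
    proof (cases rule: rl_cases)
      case (F b) then show ?thesis using eq' by (cases m) auto
    next
      case (Y e' q) then show ?thesis using eq' by auto
    next
      case (Yi e' q) then show ?thesis using eq' by auto
    qed
  next
    case C
    then have eq': "yp # v1 = l2 @ v2" using eq by simp
    from r2 show ?thesis
    proof (cases rule: rl_cases)
      case (F b)
      then have "b = yp" "v1 = ym # v2" using eq' by auto
      then show ?thesis using CP3[OF e, of "int p + 1" v2] C F by (simp add: Ry_def xpow_rep)
    next
      case (Y e' q)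
      then have "e' = 1" "v1 = replicate (Suc q) xp @ [yp] @ v2" using eq' ylet_yp[of e'] by auto
      then show ?thesis using CP4[OF e, of "int p + 1" "int q + 1" v2] C Y by (simp add: Ry_def xpow_rep)
    next
      case (Yi e' q)
      then have "e' = 1" "v1 = replicate (Suc (Suc q)) xp @ [ym] @ v2" using eq' ylet_yp[of e'] by auto
      then show ?thesis using CP5[OF e, of "int p + 1" "int q + 1" v2] C Yi by (simp add: Ry_def Ryi_def xpow_rep xpow_rep2')
    qed
  qed
qed

lemma ovYi:
  assumes e: "e \<in> {1,-1}" and ne: "us \<noteq> []" and l1: "ylet e # replicate (Suc (Suc p)) xp @ [ym] = t @ us"
    and eq: "us @ v1 = l2 @ v2" and r2: "rl l2 r2"
  shows "J (Ryi e (int p + 1) @ v1) (t @ r2 @ v2)"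
proof -
  from split3[OF l1[symmetric] ne] consider
      (A) "t = []"
    | (B) k where "k < Suc (Suc p)" "t = ylet e # replicate k xp" "us = replicate (Suc (Suc p) - k) xp @ [ym]"
    | (C) "t = ylet e # replicate (Suc (Suc p)) xp" "us = [ym]" by blast
  then show ?thesis
  proof cases
    case A
    then have eq': "ylet e # replicate (Suc (Suc p)) xp @ ym # v1 = l2 @ v2" using l1[symmetric] eq A by simp
    from r2 show ?thesis
    proof (cases rule: rl_cases)
      case (F b) then show ?thesis using eq' by auto
    next
      case (Y e' q)
      then have "replicate (Suc (Suc p)) xp @ ym # v1 = replicate (Suc q) xp @ yp # v2"
        using eq' by auto
      then show ?thesis using run[of "Suc (Suc p)" ym v1 "Suc q" yp v2] by auto
    next
      case (Yi e' q)
      then have "ylet e = ylet e'" "replicate (Suc (Suc p)) xp @ ym # v1 = replicate (Suc (Suc q)) xp @ ym # v2"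
        using eq' by auto
      then have "e = e'" "p = q" "v1 = v2" using run[of "Suc (Suc p)" ym v1 "Suc (Suc q)" ym v2] ylet_inj[OF e Yi(1)] by auto
      then show ?thesis using A Yi by (auto intro: J_refl)
    qed
  next
    case B
    then obtain m where m: "Suc (Suc p) - k = Suc m" by (metis Suc_diff_Suc)
    then have eq': "xp # replicate m xp @ ym # v1 = l2 @ v2" using B eq by simp
    from r2 show ?thesis
    proof (cases rule: rl_cases)
      case (F b) then show ?thesis using eq' by (cases m) auto
    next
      case (Y e' q) then show ?thesis using eq' by auto
    next
      case (Yi e' q) then show ?thesis using eq' by auto
    qed
  next
    case C
    then have eq': "ym # v1 = l2 @ v2" using eq by simp
    from r2 show ?thesis
    proof (cases rule: rl_cases)
      case (F b)
      then have "b = ym" "v1 = yp # v2" using eq' by auto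
      then show ?thesis using CP6[OF e, of "int p + 1" v2] C F by (simp add: Ryi_def xpow_rep xpow_rep2')
    next
      case (Y e' q)
      then have "e' = -1" "v1 = replicate (Suc q) xp @ [yp] @ v2" using eq' ylet_ym[of e'] by auto
      then show ?thesis using CP7[OF e, of "int p + 1" "int q + 1" v2] C Y by (simp add: Ry_def Ryi_def xpow_rep xpow_rep2')
    next
      case (Yi e' q)
      then have "e' = -1" "v1 = replicate (Suc (Suc q)) xp @ [ym] @ v2" using eq' ylet_ym[of e'] by auto
      then show ?thesis using CP8[OF e, of "int p + 1" "int q + 1" v2] C Yi by (simp add: Ryi_def xpow_rep xpow_rep2')
    qed
  qed
qed

lemma lc0:
  assumes r1: "rl l1 r1" and r2: "rl l2 r2" and eq: "l1 @ v1 = t @ l2 @ v2"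
  shows "J (r1 @ v1) (t @ r2 @ v2)"
proof -
  from eq obtain us where us: "(l1 = t @ us \<and> us @ v1 = l2 @ v2) \<or> (l1 @ us = t \<and> v1 = us @ l2 @ v2)"
    using append_eq_append_conv2[of l1 v1 t "l2 @ v2"] by auto
  show ?thesis
  proof (cases "(l1 @ us = t \<and> v1 = us @ l2 @ v2) \<or> us = []")
    case True
    then obtain zs where z: "t = l1 @ zs" "v1 = zs @ l2 @ v2" using us by auto
    have "red (r1 @ zs @ l2 @ v2) (r1 @ zs @ r2 @ v2)" using rl_red[OF r2, of "r1 @ zs" v2] by simp
    moreover have "red (l1 @ zs @ r2 @ v2) (r1 @ zs @ r2 @ v2)" using rl_red[OF r1, of "[]" "zs @ r2 @ v2"] by simp
    ultimately show ?thesis using z unfolding J_def by auto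
  next
    case False
    then have h: "l1 = t @ us" "us @ v1 = l2 @ v2" "us \<noteq> []" using us by auto
    from r1 show ?thesis
    proof (cases rule: rl_cases)
      case (F a) then show ?thesis using ovF[OF h(3) _ h(2) r2] h(1) by simp
    next
      case (Y e p) then show ?thesis using ovY[OF Y(1) h(3) _ h(2) r2] h(1) by simp
    next
      case (Yi e p) then show ?thesis using ovYi[OF Yi(1) h(3) _ h(2) r2] h(1) by simp
    qed
  qed
qed

lemma lc_ord:
  assumes r1: "rl l1 r1" and r2: "rl l2 r2" and eq: "u1 @ l1 @ v1 = u2 @ l2 @ v2"
    and len: "length u1 \<le> length u2"
  shows "J (u1 @ r1 @ v1) (u2 @ r2 @ v2)"
proof -
  from eq obtain us where us: "(u1 = u2 @ us \<and> us @ l1 @ v1 = l2 @ v2) \<or> (u1 @ us = u2 \<and> l1 @ v1 = us @ l2 @ v2)"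
    using append_eq_append_conv2[of u1 "l1 @ v1" u2 "l2 @ v2"] by auto
  have "\<exists>t. u2 = u1 @ t \<and> l1 @ v1 = t @ l2 @ v2"
    using us
  proof
    assume a: "u1 = u2 @ us \<and> us @ l1 @ v1 = l2 @ v2"
    then have "length us = 0" using len by simp
    then have "us = []" by simp
    then show ?thesis using a by simp
  next
    assume a: "u1 @ us = u2 \<and> l1 @ v1 = us @ l2 @ v2"
    then show ?thesis by blast
  qed
  then obtain t where t: "u2 = u1 @ t" "l1 @ v1 = t @ l2 @ v2" by blast
  show ?thesis using J_ctx[OF lc0[OF r1 r2 t(2)], of u1 "[]"] t(1) by simp
qed

lemma local_conf: "red w a \<Longrightarrow> red w b \<Longrightarrow> \<exists>d. red\<^sup>*\<^sup>* a d \<and> red\<^sup>*\<^sup>* b d"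
proof -
  assume "red w a" "red w b"
  then obtain u1 l1 r1 v1 u2 l2 r2 v2 where h: "rl l1 r1" "w = u1 @ l1 @ v1" "a = u1 @ r1 @ v1"
     "rl l2 r2" "w = u2 @ l2 @ v2" "b = u2 @ r2 @ v2" unfolding red_iff by blast
  have "J a b"
  proof (cases "length u1 \<le> length u2")
    case True then show ?thesis using lc_ord[OF h(1) h(4)] h by simp
  next
    case False then show ?thesis using lc_ord[OF h(4) h(1)] h J_sym by simp
  qed
  then show ?thesis unfolding J_def .
qed

lemma confluent: "red\<^sup>*\<^sup>* a b \<Longrightarrow> red\<^sup>*\<^sup>* a c \<Longrightarrow> \<exists>d. red\<^sup>*\<^sup>* b d \<and> red\<^sup>*\<^sup>* c d"
  by (rule newman[OF wf_red local_conf])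

lemma cr: "same_elem a b \<Longrightarrow> \<exists>d. red\<^sup>*\<^sup>* a d \<and> red\<^sup>*\<^sup>* b d"
  unfolding same_elem_def by (rule church_rosser[OF confluent])

lemma NF_reds: "a \<in> NF \<Longrightarrow> red\<^sup>*\<^sup>* a d \<Longrightarrow> d = a"
  unfolding NF_def by (auto elim: converse_rtranclpE)

lemma NF_unique: "a \<in> NF \<Longrightarrow> b \<in> NF \<Longrightarrow> same_elem a b \<Longrightarrow> a = b"
proof -
  assume h: "a \<in> NF" "b \<in> NF" "same_elem a b"
  then obtain d where "red\<^sup>*\<^sup>* a d" "red\<^sup>*\<^sup>* b d" using cr by blast
  then have "d = a" "d = b" using NF_reds h by blast+
  then show "a = b" by simp
qed

lemma reds_same: "red\<^sup>*\<^sup>* a b \<Longrightarrow> same_elem a b"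
  unfolding same_elem_def
proof (induction rule: rtranclp_induct)
  case base then show ?case by (rule rtranclp.rtrancl_refl)
next
  case (step y z)
  show ?case by (rule rtranclp.rtrancl_into_rtrancl[OF step.IH]) (use step.hyps(2) in blast)
qed

lemma same_sym: "same_elem a b \<Longrightarrow> same_elem b a"
  unfolding same_elem_def
proof (induction rule: rtranclp_induct)
  case base then show ?case by (rule rtranclp.rtrancl_refl)
next
  case (step y z)
  show ?case by (rule converse_rtranclp_into_rtranclp[OF _ step.IH]) (use step.hyps(2) in blast)
qed

lemma same_trans: "same_elem a b \<Longrightarrow> same_elem b c \<Longrightarrow> same_elem a c"
  unfolding same_elem_def by (rule rtranclp_trans)

lemma nf_exists: "\<exists>v. v \<in> NF \<and> same_elem w v"
proof -
  obtain v where v: "red\<^sup>*\<^sup>* w v" "\<not> (\<exists>v'. red v v')" using wn[OF wf_red, of w] by blast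
  have "v \<in> NF" using v(2) unfolding NF_def by simp
  moreover have "same_elem w v" using v(1) by (rule reds_same)
  ultimately show ?thesis by blast
qed

lemma nf_spec: "nf w \<in> NF \<and> same_elem w (nf w)"
proof -
  obtain v where v: "v \<in> NF" "same_elem w v" using nf_exists by blast
  have u: "v' = v" if "v' \<in> NF" "same_elem w v'" for v'
  proof -
    have "same_elem v' v" by (rule same_trans[OF same_sym[OF that(2)] v(2)])
    then show ?thesis by (rule NF_unique[OF that(1) v(1)])
  qed
  have "nf w = v" unfolding nf_def
  proof (rule the_equality)
    show "v \<in> NF \<and> same_elem w v" using v by (rule conjI)
  next
    fix x assume "x \<in> NF \<and> same_elem w x"
    then show "x = v" using u by blast
  qed
  then show ?thesis using v by simp
qed

lemma nf_eqI: "v \<in> NF \<Longrightarrow> same_elem w v \<Longrightarrow> nf w = v"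
proof -
  assume h: "v \<in> NF" "same_elem w v"
  have "same_elem (nf w) v" by (rule same_trans[OF same_sym[OF conjunct2[OF nf_spec]] h(2)])
  then show "nf w = v" by (rule NF_unique[OF conjunct1[OF nf_spec] h(1)])
qed

definition loc :: "int \<Rightarrow> int \<Rightarrow> int \<Rightarrow> bool" where
  "loc a k b \<longleftrightarrow> \<not> (k = 0 \<and> b = -a) \<and> \<not> (b = 1 \<and> k \<ge> 1) \<and> \<not> (b = -1 \<and> k \<ge> 2)"

lemma rl_ne: "rl l r \<Longrightarrow> l \<noteq> []" by (auto simp: rl_def)

lemma NF_iff: "w \<in> NF \<longleftrightarrow> \<not> (\<exists>w'. red w w')" by (simp add: NF_def)

lemma NF_snoc:
  assumes nf: "w \<in> NF"
    and c1: "\<And>u c. w = u @ [c] \<Longrightarrow> d \<noteq> linv c"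
    and c2: "\<And>u e p. d = yp \<Longrightarrow> w \<noteq> u @ ylet e # replicate (Suc p) xp"
    and c3: "\<And>u e p. d = ym \<Longrightarrow> w \<noteq> u @ ylet e # replicate (Suc (Suc p)) xp"
  shows "w @ [d] \<in> NF"
proof -
  have False if r: "red (w @ [d]) w'" for w'
  proof -
    obtain U l r V where h: "rl l r" "w @ [d] = U @ l @ V" using r unfolding red_iff by blast
    show False
    proof (cases V rule: rev_exhaust)
      case (snoc V' z)
      then have "w = U @ l @ V'" using h(2) by (metis append.assoc append1_eq_conv)
      then have "red w (U @ r @ V')" using rl_red[OF h(1)] by simp
      then show False using nf unfolding NF_iff by blast
    next
      case Nil
      have "l \<noteq> []" using rl_ne[OF h(1)] .
      then obtain l' z where l: "l = l' @ [z]" by (metis rev_exhaust)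
      then have wl: "w = U @ l'" "d = z" using h(2) Nil by (metis append.assoc append1_eq_conv append_Nil2)+
      from h(1) show False
      proof (cases rule: rl_cases)
        case (F a)
        then have "l' @ [z] = [a] @ [linv a]" using l by simp
        then have "l' = [a]" "z = linv a" by (simp_all only: append1_eq_conv)
        then show False using c1[of U a] wl by simp
      next
        case (Y e p)
        then have "l' @ [z] = (ylet e # replicate (Suc p) xp) @ [yp]" using l by simp
        then have "l' = ylet e # replicate (Suc p) xp" "z = yp" by (simp_all only: append1_eq_conv)
        then show False using c2[of U e p] wl by simp
      next
        case (Yi e p)
        then have "l' @ [z] = (ylet e # replicate (Suc (Suc p)) xp) @ [ym]" using l by simp
        then have "l' = ylet e # replicate (Suc (Suc p)) xp" "z = ym" by (simp_all only: append1_eq_conv)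
        then show False using c3[of U e p] wl by simp
      qed
    qed
  qed
  then show ?thesis unfolding NF_iff by blast
qed

lemma NF_Nil: "[] \<in> NF"
proof -
  have False if r0: "red [] w'" for w'
  proof -
    obtain u l r v where "rl l r" "[] = u @ l @ v" using r0[unfolded red_iff] by blast
    then show False using rl_ne by auto
  qed
  then show ?thesis unfolding NF_iff by blast
qed

lemma NF_app_rep:
  assumes "w \<in> NF" "x \<in> {xp, xm}" "w = [] \<or> last w \<noteq> linv x"
  shows "w @ replicate n x \<in> NF"
proof (induction n)
  case 0 then show ?case using assms by simp
next
  case (Suc n)
  have eq: "w @ replicate (Suc n) x = (w @ replicate n x) @ [x]" by (simp add: replicate_append_same[symmetric])
  have "(w @ replicate n x) @ [x] \<in> NF"
  proof (rule NF_snoc[OF Suc.IH])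
    fix u c assume h: "w @ replicate n x = u @ [c]"
    show "x \<noteq> linv c"
    proof (cases n)
      case 0 then have "w = u @ [c]" using h by simp
      then show ?thesis using assms(3) by auto
    next
      case (Suc n')
      have "c = last (u @ [c])" by simp
      also have "\<dots> = last (w @ replicate n x)" using h by simp
      also have "\<dots> = x" using Suc by (simp add: last_append)
      finally have "c = x" .
      then show ?thesis using assms(2) by auto
    qed
  next
    fix u e p assume "x = yp"
    then show "w @ replicate n x \<noteq> u @ ylet e # replicate (Suc p) xp" using assms(2) by auto
  next
    fix u e p assume "x = ym"
    then show "w @ replicate n x \<noteq> u @ ylet e # replicate (Suc (Suc p)) xp" using assms(2) by auto
  qed
  then show ?case using eq by simp
qed

lemma NF_app_xpow: "w \<in> NF \<Longrightarrow> w = [] \<or> isy (last w) \<Longrightarrow> w @ xpow k \<in> NF"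
proof -
  assume a: "w \<in> NF" "w = [] \<or> isy (last w)"
  have "w = [] \<or> last w \<noteq> linv xp" "w = [] \<or> last w \<noteq> linv xm" using a(2) by auto
  then show ?thesis unfolding xpow_def using NF_app_rep[OF a(1)] by auto
qed

lemma NF_xpow: "xpow k \<in> NF" using NF_app_xpow[OF NF_Nil] by simp

lemma xpow_last: "k \<noteq> 0 \<Longrightarrow> xpow k \<noteq> [] \<and> last (xpow k) \<in> {xp, xm}"
  by (auto simp: xpow_def)

lemma xpow_eq_rep: "xpow k = replicate (Suc p) xp \<Longrightarrow> k = int p + 1"
proof (cases "k \<ge> 0")
  case True
  assume "xpow k = replicate (Suc p) xp"
  then have "replicate (nat k) xp = replicate (Suc p) xp" using True by (simp add: xpow_def)
  then have "nat k = Suc p" by (metis length_replicate)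
  then show ?thesis using True by simp
next
  case False
  assume "xpow k = replicate (Suc p) xp"
  then have "replicate (nat (-k)) xm = replicate (Suc p) xp" using False by (simp add: xpow_def)
  then show ?thesis using False by (cases "nat (-k)") auto
qed

lemma lasty: "xs @ c # ys = xs' @ c' # ys' \<Longrightarrow> isy c \<Longrightarrow> isy c' \<Longrightarrow> (\<forall>z\<in>set ys. \<not> isy z) \<Longrightarrow>
   (\<forall>z\<in>set ys'. \<not> isy z) \<Longrightarrow> xs = xs' \<and> c = c' \<and> ys = ys'"
proof (induction xs arbitrary: xs')
  case Nil then show ?case by (cases xs') auto
next
  case (Cons a xs) then show ?case by (cases xs') auto
qed

lemma noy_xpow: "\<forall>z\<in>set (xpow k). \<not> isy z" by (auto simp: xpow_def)
lemma noy_rep: "\<forall>z\<in>set (replicate n xp). \<not> isy z" by auto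

lemma ylet_pm: "(e::int) \<in> {1,-1} \<Longrightarrow> -e \<in> {1,-1}" by auto

lemma NF_app_y:
  assumes nf: "u @ [ylet a] @ xpow k \<in> NF" and a: "a \<in> {1,-1}" and b: "b \<in> {1,-1}" and l: "loc a k b"
  shows "u @ [ylet a] @ xpow k @ [ylet b] \<in> NF"
proof -
  have "(u @ [ylet a] @ xpow k) @ [ylet b] \<in> NF"
  proof (rule NF_snoc[OF nf])
    fix u' c assume h: "u @ [ylet a] @ xpow k = u' @ [c]"
    show "ylet b \<noteq> linv c"
    proof (cases "k = 0")
      case True
      then have "c = ylet a" using h by simp
      then show ?thesis using l True linv_ylet[OF a] ylet_inj[OF b ylet_pm[OF a]] by (auto simp: loc_def)
    next
      case False
      then have "c = last (xpow k)" using h by (metis append_is_Nil_conv last_appendR last_snoc xpow_last)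
      then have "c \<in> {xp, xm}" using xpow_last[OF False] by simp
      then show ?thesis by auto
    qed
  next
    fix u' e p assume "ylet b = yp"
    then have b1: "b = 1" using ylet_yp[OF b] by simp
    show "u @ [ylet a] @ xpow k \<noteq> u' @ ylet e # replicate (Suc p) xp"
    proof
      assume "u @ [ylet a] @ xpow k = u' @ ylet e # replicate (Suc p) xp"
      then have "xpow k = replicate (Suc p) xp" using lasty[of u "ylet a" "xpow k" u' "ylet e" "replicate (Suc p) xp"] noy_xpow noy_rep by simp
      then have "k = int p + 1" by (rule xpow_eq_rep)
      then show False using l b1 by (simp add: loc_def)
    qed
  next
    fix u' e p assume "ylet b = ym"
    then have b1: "b = -1" using ylet_ym[OF b] by simp
    show "u @ [ylet a] @ xpow k \<noteq> u' @ ylet e # replicate (Suc (Suc p)) xp"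
    proof
      assume "u @ [ylet a] @ xpow k = u' @ ylet e # replicate (Suc (Suc p)) xp"
      then have "xpow k = replicate (Suc (Suc p)) xp" using lasty[of u "ylet a" "xpow k" u' "ylet e" "replicate (Suc (Suc p)) xp"] noy_xpow noy_rep by simp
      then have "k = int (Suc p) + 1" by (rule xpow_eq_rep)
      then show False using l b1 by (simp add: loc_def)
    qed
  qed
  then show ?thesis by simp
qed

lemma NF_app_y0:
  assumes b: "b \<in> {1,-1}"
  shows "xpow k @ [ylet b] \<in> NF"
proof (rule NF_snoc[OF NF_xpow])
  fix u c assume h: "xpow k = u @ [c]"
  then have "k \<noteq> 0" by auto
  then have "c \<in> {xp, xm}" using h xpow_last by (metis last_snoc)
  then show "ylet b \<noteq> linv c" by auto
next
  fix u e p show "xpow k \<noteq> u @ ylet e # replicate (Suc p) xp"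
  proof
    assume h: "xpow k = u @ ylet e # replicate (Suc p) xp"
    have "ylet e \<in> set (xpow k)" unfolding h by simp
    then show False by simp
  qed
next
  fix u e p show "xpow k \<noteq> u @ ylet e # replicate (Suc (Suc p)) xp"
  proof
    assume h: "xpow k = u @ ylet e # replicate (Suc (Suc p)) xp"
    have "ylet e \<in> set (xpow k)" unfolding h by simp
    then show False by simp
  qed
qed

lemma NF_factor: "u @ w @ v \<in> NF \<Longrightarrow> w \<in> NF"
  unfolding NF_iff using red_ctx by blast

lemma loc_of_NF:
  assumes nf: "u @ [ylet a] @ xpow k @ [ylet b] @ v \<in> NF" and a: "a \<in> {1,-1}" and b: "b \<in> {1,-1}"
  shows "loc a k b"
proof -
  have False if "k = 0" "b = -a"
  proof -
    have "rstep FreeR (u @ [ylet a, linv (ylet a)] @ v) (u @ v)" by (rule rstep.free)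
    then show False using nf that linv_ylet[OF a] unfolding NF_def reduces1_def by auto
  qed
  moreover have False if "b = 1" "k \<ge> 1"
  proof -
    have "rstep (YR k) (u @ [ylet a] @ xpow k @ [yp] @ v) (u @ xpow k @ [yp] @ xpow (- k - 1) @ [ylet a] @ xpow (k + 1) @ v)"
      by (rule rstep.yrule) (use a that in auto)
    then show False using nf that unfolding NF_def reduces1_def by auto
  qed
  moreover have False if "b = -1" "k \<ge> 2"
  proof -
    have "rstep (YinvR (k-1)) (u @ [ylet a] @ xpow (k - 1 + 1) @ [ym] @ v) (u @ xpow (k - 1 + 1) @ [ym] @ xpow (- (k-1)) @ [ylet a] @ xpow (k-1) @ v)"
      by (rule rstep.yinvrule) (use a that in auto)
    then show False using nf that unfolding NF_def reduces1_def by auto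
  qed
  ultimately show ?thesis unfolding loc_def by blast
qed

lemma syls_empty: "b < a \<Longrightarrow> syls i e a b = []"
  by (simp add: syls_def)

lemma syls_split: "a \<le> Suc c \<Longrightarrow> c \<le> b \<Longrightarrow> syls i e a b = syls i e (Suc c) b @ syls i e a c"
proof -
  assume h: "a \<le> Suc c" "c \<le> b"
  have "[a..<Suc c + (b - c)] = [a..<Suc c] @ [Suc c..<Suc c + (b - c)]"
    by (rule upt_add_eq_append) (use h in simp)
  moreover have "Suc c + (b - c) = Suc b" using h by simp
  ultimately have "[a..<Suc b] = [a..<Suc c] @ [Suc c..<Suc b]" by simp
  then show ?thesis unfolding syls_def by simp
qed

lemma syls_self: "syls i e a a = syl i e a"
  by (simp add: syls_def)

lemma syls_top: "1 \<le> a \<Longrightarrow> a \<le> b \<Longrightarrow> syls i e a b = syl i e b @ syls i e a (b - 1)"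
proof -
  assume h: "1 \<le> a" "a \<le> b"
  have "syls i e a b = syls i e (Suc (b - 1)) b @ syls i e a (b - 1)"
    using h by (intro syls_split) auto
  then show ?thesis using h by (simp add: syls_self)
qed

lemma syls_bot: "a \<le> b \<Longrightarrow> syls i e a b = syls i e (Suc a) b @ syl i e a"
  using syls_split[of a a b i e] by (simp add: syls_self)

lemma syl_last: "syl i e k \<noteq> [] \<and> last (syl i e k) = ylet (e k)"
  by (simp add: syl_def)

lemma syls_last: "a \<le> b \<Longrightarrow> syls i e a b \<noteq> [] \<and> last (syls i e a b) = ylet (e a)"
  using syls_bot[of a b i e] syl_last[of i e a] by simp

lemma NF_syls:
  "P @ [ylet (e (Suc b))] \<in> NF \<Longrightarrow> 1 \<le> a \<Longrightarrow>
   (\<forall>k. a \<le> k \<and> k \<le> b \<longrightarrow> loc (e (Suc k)) (i k) (e k) \<and> e k \<in> {1,-1}) \<Longrightarrow> e (Suc b) \<in> {1,-1} \<Longrightarrow>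
   P @ [ylet (e (Suc b))] @ syls i e a b \<in> NF"
proof (induction b arbitrary: P)
  case 0 then show ?case by (simp add: syls_empty)
next
  case (Suc b)
  show ?case
  proof (cases "a \<le> Suc b")
    case False then show ?thesis using Suc.prems by (simp add: syls_empty)
  next
    case True
    have eq: "syls i e a (Suc b) = xpow (i (Suc b)) @ [ylet (e (Suc b))] @ syls i e a b"
      using syls_top[OF Suc.prems(2) True] by (simp add: syl_def)
    have h1: "P @ [ylet (e (Suc (Suc b)))] @ xpow (i (Suc b)) \<in> NF"
      using NF_app_xpow[OF Suc.prems(1)] by simp
    have lk: "loc (e (Suc (Suc b))) (i (Suc b)) (e (Suc b)) \<and> e (Suc b) \<in> {1,-1}" using Suc.prems(3) True by blast
    have h2: "(P @ [ylet (e (Suc (Suc b)))] @ xpow (i (Suc b))) @ [ylet (e (Suc b))] \<in> NF"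
      using NF_app_y[OF h1 Suc.prems(4)] lk by simp
    have "(P @ [ylet (e (Suc (Suc b)))] @ xpow (i (Suc b))) @ [ylet (e (Suc b))] @ syls i e a b \<in> NF"
      by (rule Suc.IH[OF h2 Suc.prems(2)]) (use Suc.prems(3) lk in auto)
    then show ?thesis using eq by simp
  qed
qed

lemma psum_0[simp]: "psum i 0 = i 0" by (simp add: psum_def)
lemma psum_Suc[simp]: "psum i (Suc k) = psum i k + i (Suc k)" by (simp add: psum_def)

lemma mindex_props:
  assumes "n \<ge> 1" "i 0 \<ge> 1"
  shows "1 \<le> mindex i n \<and> mindex i n \<le> n \<and> (\<forall>k<mindex i n. psum i k \<ge> 1) \<and>
         (mindex i n < n \<longrightarrow> psum i (mindex i n) \<le> 0)"
proof (cases "\<exists>k \<le> n. psum i k \<le> 0")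
  case True
  let ?m = "LEAST k. k \<le> n \<and> psum i k \<le> 0"
  have m: "mindex i n = ?m" using True by (simp add: mindex_def)
  have P: "?m \<le> n \<and> psum i ?m \<le> 0" using True by (metis (mono_tags, lifting) LeastI)
  have lt: "\<forall>k<?m. psum i k \<ge> 1"
  proof (intro allI impI)
    fix k assume "k < ?m"
    then have "\<not> (k \<le> n \<and> psum i k \<le> 0)" using not_less_Least by blast
    then show "psum i k \<ge> 1" using \<open>k < ?m\<close> P by auto
  qed
  have "?m \<noteq> 0"
  proof
    assume "?m = 0"
    then have "psum i 0 \<le> 0" using P by simp
    then show False using assms by simp
  qed
  then show ?thesis using m P lt by auto
next
  case False
  then have "mindex i n = n" unfolding mindex_def by (simp only: if_False)
  moreover have "\<forall>k<n. psum i k \<ge> 1"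
  proof (intro allI impI)
    fix k assume "k < n"
    then have "\<not> psum i k \<le> 0" using False by auto
    then show "psum i k \<ge> 1" by simp
  qed
  ultimately show ?thesis using assms by auto
qed

lemma same_app: "same_elem a b \<Longrightarrow> same_elem (a @ t) (b @ t)"
  unfolding same_elem_def
proof (induction rule: rtranclp_induct)
  case base then show ?case by (rule rtranclp.rtrancl_refl)
next
  case (step y z)
  have "red (y @ t) (z @ t) \<or> red (z @ t) (y @ t)"
    using step.hyps(2) red_ctx[of y z "[]" t] red_ctx[of z y "[]" t] by auto
  then show ?case by (rule rtranclp.rtrancl_into_rtrancl[OF step.IH])
qed

lemma onT1: "nf g @ [yp] \<in> NF \<Longrightarrow> on_T g yp"
proof -
  assume h: "nf g @ [yp] \<in> NF"
  have "same_elem (nf g) g" using nf_spec same_sym by blast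
  then have "same_elem (take (length (nf g)) (nf g @ [yp])) g \<and> (nf g @ [yp]) ! length (nf g) = yp" by simp
  then show ?thesis unfolding on_T_def using h
    by (intro bexI[of _ "nf g @ [yp]"] exI[of _ "length (nf g)"]) auto
qed

lemma onT2: "nf g = p @ [ym] \<Longrightarrow> on_T g yp"
proof -
  assume h: "nf g = p @ [ym]"
  have s1: "same_elem (g @ [yp]) (nf g @ [yp])" using same_app nf_spec by blast
  have "rstep FreeR (p @ [ym, linv ym] @ []) (p @ [])" by (rule rstep.free)
  then have "red (nf g @ [yp]) p" using h unfolding reduces1_def by auto
  then have "same_elem (nf g @ [yp]) p" using reds_same by blast
  then have "same_elem p (g @ [yp])" using same_trans[OF s1] same_sym by blast
  moreover have "nf g \<in> NF" using nf_spec by blast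
  ultimately have "same_elem (take (length p) (nf g)) (g @ [yp]) \<and> nf g ! length p = linv yp" using h by simp
  then show ?thesis unfolding on_T_def using \<open>nf g \<in> NF\<close> h
    by (intro bexI[of _ "nf g"] exI[of _ "length p"]) auto
qed

lemma rconv: "rewrseq a ks b \<Longrightarrow> a = a' \<Longrightarrow> b = b' \<Longrightarrow> rewrseq a' ks b'" by simp

lemma filter_free: "set ks \<subseteq> {FreeR} \<Longrightarrow> filter (\<lambda>k. k \<noteq> FreeR) ks = []"
  by (induction ks) auto

definition T :: "(nat \<Rightarrow> int) \<Rightarrow> (nat \<Rightarrow> int) \<Rightarrow> nat \<Rightarrow> letter list" where
  "T i e k = (if k = 0 then [] else xpow (- psum i (k - 1) - 1) @ [ylet (e k)] @ syls i e 1 (k - 1) @ xpow (i 0 + 1))"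
definition W :: "(nat \<Rightarrow> int) \<Rightarrow> (nat \<Rightarrow> int) \<Rightarrow> nat \<Rightarrow> nat \<Rightarrow> letter list" where
  "W i e n k = syls i e (k + 1) n @ xpow (psum i k) @ [yp] @ T i e k"

lemma R_seq: "\<exists>ks. set ks \<subseteq> {FreeR} \<and> rewrseq (xpow (psum i k + 1) @ T i e k) ks (syls i e 1 k @ xpow (i 0 + 1))"
proof (cases k)
  case 0 then show ?thesis using refl_seq by (simp add: T_def syls_empty)
next
  case (Suc k')
  have "psum i k + 1 + (- psum i k' - 1) = i k" using Suc by simp
  then obtain ks where ks: "set ks \<subseteq> {FreeR}" "rewrseq (xpow (psum i k + 1) @ xpow (- psum i k' - 1)) ks (xpow (i k))"
    using xmerge_seq by blast
  have "rewrseq ([] @ (xpow (psum i k + 1) @ xpow (- psum i k' - 1)) @ [ylet (e k)] @ syls i e 1 k' @ xpow (i 0 + 1)) ks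
          ([] @ xpow (i k) @ [ylet (e k)] @ syls i e 1 k' @ xpow (i 0 + 1))"
    by (rule rewrseq_ctx[OF ks(2)])
  moreover have "syls i e 1 k = xpow (i k) @ [ylet (e k)] @ syls i e 1 k'"
    using syls_top[of 1 k i e] Suc by (simp add: syl_def)
  ultimately show ?thesis using ks(1) Suc by (auto simp: T_def)
qed

lemma W_seq:
  assumes n1: "n \<ge> 1" and i0: "i 0 \<ge> 1" and eps: "\<forall>k. 1 \<le> k \<and> k \<le> n \<longrightarrow> e k \<in> {1, -1}"
  shows "k \<le> mindex i n \<Longrightarrow> \<exists>ks. rewrseq (syls i e 1 n @ xpow (i 0) @ [yp]) ks (W i e n k) \<and>
           filter (\<lambda>k. k \<noteq> FreeR) ks = map (\<lambda>j. YR (psum i j)) [0..<k]"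
proof (induction k)
  case 0
  have "W i e n 0 = syls i e 1 n @ xpow (i 0) @ [yp]" by (simp add: W_def T_def)
  then show ?case by (intro exI[of _ "[]"]) (auto intro: rewrseq.intros)
next
  case (Suc k)
  have mp: "1 \<le> mindex i n \<and> mindex i n \<le> n \<and> (\<forall>k<mindex i n. psum i k \<ge> 1)"
    using mindex_props[of n i, OF n1 i0] by blast
  have kn: "Suc k \<le> n" and sk: "psum i k \<ge> 1" using Suc.prems mp by auto
  obtain ks where ks: "rewrseq (syls i e 1 n @ xpow (i 0) @ [yp]) ks (W i e n k)"
      "filter (\<lambda>k. k \<noteq> FreeR) ks = map (\<lambda>j. YR (psum i j)) [0..<k]"
    using Suc.IH Suc.prems by auto
  let ?A = "syls i e (Suc (Suc k)) n"
  let ?E = "e (Suc k)"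
  have ee: "?E \<in> {1,-1}" using eps kn by auto
  have sp: "syls i e (Suc k) n = ?A @ xpow (i (Suc k)) @ [ylet ?E]"
    using syls_split[of "Suc k" "Suc k" n i e] kn by (simp add: syls_self syl_def)
  have Wk: "W i e n k = (?A @ xpow (i (Suc k))) @ [ylet ?E] @ xpow (psum i k) @ [yp] @ T i e k"
    unfolding W_def using sp by simp
  have st: "rstep (YR (psum i k)) ((?A @ xpow (i (Suc k))) @ [ylet ?E] @ xpow (psum i k) @ [yp] @ T i e k)
     ((?A @ xpow (i (Suc k))) @ xpow (psum i k) @ [yp] @ xpow (- psum i k - 1) @ [ylet ?E] @ xpow (psum i k + 1) @ T i e k)"
    by (rule rstep.yrule) (use ee sk in auto)
  obtain ks2 where ks2: "set ks2 \<subseteq> {FreeR}" "rewrseq (xpow (i (Suc k)) @ xpow (psum i k)) ks2 (xpow (psum i (Suc k)))"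
    using xmerge_seq[of "i (Suc k)" "psum i k" "psum i (Suc k)"] by auto
  have s2: "rewrseq (?A @ xpow (i (Suc k)) @ xpow (psum i k) @ [yp] @ xpow (- psum i k - 1) @ [ylet ?E] @ xpow (psum i k + 1) @ T i e k) ks2
      (?A @ xpow (psum i (Suc k)) @ [yp] @ xpow (- psum i k - 1) @ [ylet ?E] @ xpow (psum i k + 1) @ T i e k)"
    by (rule rconv[OF rewrseq_ctx[OF ks2(2)]]) simp_all
  obtain ks3 where ks3: "set ks3 \<subseteq> {FreeR}" "rewrseq (xpow (psum i k + 1) @ T i e k) ks3 (syls i e 1 k @ xpow (i 0 + 1))"
    using R_seq by blast
  have s3: "rewrseq (?A @ xpow (psum i (Suc k)) @ [yp] @ xpow (- psum i k - 1) @ [ylet ?E] @ xpow (psum i k + 1) @ T i e k) ks3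
      (?A @ xpow (psum i (Suc k)) @ [yp] @ xpow (- psum i k - 1) @ [ylet ?E] @ syls i e 1 k @ xpow (i 0 + 1))"
    by (rule rconv[OF rewrseq_ctx[OF ks3(2), of "?A @ xpow (psum i (Suc k)) @ [yp] @ xpow (- psum i k - 1) @ [ylet ?E]" "[]"]]) simp_all
  have WSk: "W i e n (Suc k) = ?A @ xpow (psum i (Suc k)) @ [yp] @ xpow (- psum i k - 1) @ [ylet ?E] @ syls i e 1 k @ xpow (i 0 + 1)"
    by (simp add: W_def T_def)
  have all: "rewrseq (syls i e 1 n @ xpow (i 0) @ [yp]) (ks @ [YR (psum i k)] @ ks2 @ ks3) (W i e n (Suc k))"
  proof -
    have a1: "rewrseq (W i e n k) [YR (psum i k)] ((?A @ xpow (i (Suc k))) @ xpow (psum i k) @ [yp] @ xpow (- psum i k - 1) @ [ylet ?E] @ xpow (psum i k + 1) @ T i e k)"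
      using rewrseq_one[OF st] Wk by simp
    have a2: "rewrseq ((?A @ xpow (i (Suc k))) @ xpow (psum i k) @ [yp] @ xpow (- psum i k - 1) @ [ylet ?E] @ xpow (psum i k + 1) @ T i e k) (ks2 @ ks3) (W i e n (Suc k))"
      using rewrseq_trans[OF s2 s3] WSk by simp
    show ?thesis using rewrseq_trans[OF ks(1) rewrseq_trans[OF a1 a2]] by simp
  qed
  moreover have "filter (\<lambda>k. k \<noteq> FreeR) (ks @ [YR (psum i k)] @ ks2 @ ks3) = map (\<lambda>j. YR (psum i j)) [0..<Suc k]"
    using ks(2) filter_free[OF ks2(1)] filter_free[OF ks3(1)] by simp
  ultimately show ?case by blast
qed

lemma loc_all:
  assumes nf: "syls i e 1 n @ xpow (i 0) \<in> NF" and eps: "\<forall>k. 1 \<le> k \<and> k \<le> n \<longrightarrow> e k \<in> {1, -1}"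
    and k: "1 \<le> k" "k < n"
  shows "loc (e (Suc k)) (i k) (e k)"
proof -
  have "syls i e 1 n = syls i e (Suc k) n @ syls i e 1 k" using k by (intro syls_split) auto
  moreover have "syls i e (Suc k) n = syls i e (Suc (Suc k)) n @ syl i e (Suc k)"
    using syls_split[of "Suc k" "Suc k" n i e] k by (simp add: syls_self)
  moreover have "syls i e 1 k = syl i e k @ syls i e 1 (k - 1)" using syls_top[of 1 k i e] k by simp
  ultimately have "syls i e 1 n @ xpow (i 0) = (syls i e (Suc (Suc k)) n @ xpow (i (Suc k))) @ [ylet (e (Suc k))] @ xpow (i k) @ [ylet (e k)] @ (syls i e 1 (k - 1) @ xpow (i 0))"
    by (simp add: syl_def)
  then show ?thesis using loc_of_NF[of "syls i e (Suc (Suc k)) n @ xpow (i (Suc k))" "e (Suc k)" "i k" "e k" "syls i e 1 (k - 1) @ xpow (i 0)"] nf eps k by auto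
qed

lemma prefix_NF:
  assumes nf: "syls i e 1 n @ xpow (i 0) \<in> NF" and c: "c \<le> n"
  shows "syls i e (Suc c) n \<in> NF"
proof -
  have "syls i e 1 n = syls i e (Suc c) n @ syls i e 1 c" using c by (intro syls_split) auto
  then show ?thesis using NF_factor[of "[]" "syls i e (Suc c) n" "syls i e 1 c @ xpow (i 0)"] nf by simp
qed

lemma tail_NF:
  assumes P: "P @ [ylet (e m)] \<in> NF" and m1: "1 \<le> m" and mn: "m \<le> n"
    and nf: "syls i e 1 n @ xpow (i 0) \<in> NF" and eps: "\<forall>k. 1 \<le> k \<and> k \<le> n \<longrightarrow> e k \<in> {1, -1}"
  shows "P @ [ylet (e m)] @ syls i e 1 (m - 1) @ xpow (i 0 + 1) \<in> NF"
proof -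
  have sm: "Suc (m - 1) = m" using m1 by simp
  have "P @ [ylet (e (Suc (m - 1)))] @ syls i e 1 (m - 1) \<in> NF"
  proof (rule NF_syls)
    show "P @ [ylet (e (Suc (m - 1)))] \<in> NF" using P sm by simp
    show "\<forall>k. 1 \<le> k \<and> k \<le> m - 1 \<longrightarrow> loc (e (Suc k)) (i k) (e k) \<and> e k \<in> {1, -1}"
      using loc_all[OF nf eps] eps mn by auto
    show "e (Suc (m - 1)) \<in> {1, -1}" using sm eps m1 mn by auto
  qed simp
  then have h: "P @ [ylet (e m)] @ syls i e 1 (m - 1) \<in> NF" using sm by simp
  have "isy (last (P @ [ylet (e m)] @ syls i e 1 (m - 1)))"
  proof (cases "1 \<le> m - 1")
    case True then show ?thesis using syls_last[OF True, of i e] by simp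
  next
    case False then show ?thesis by (simp add: syls_empty)
  qed
  then have "(P @ [ylet (e m)] @ syls i e 1 (m - 1)) @ xpow (i 0 + 1) \<in> NF"
    using NF_app_xpow[OF h] by simp
  then show ?thesis by simp
qed

lemma case1_NF:
  assumes nf: "syls i e 1 n @ xpow (i 0) \<in> NF" and n1: "n \<ge> 1" and i0: "i 0 \<ge> 1"
    and eps: "\<forall>k. 1 \<le> k \<and> k \<le> n \<longrightarrow> e k \<in> {1, -1}" and m: "m = mindex i n"
    and cond: "m = n \<or> psum i m \<noteq> 0 \<or> e (m + 1) = 1"
  shows "syls i e (m + 1) n @ xpow (psum i m) @ [yp] @ xpow (- psum i (m - 1) - 1) @ [ylet (e m)]
                    @ syls i e 1 (m - 1) @ xpow (i 0 + 1) \<in> NF"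
proof -
  have mp: "1 \<le> m" "m \<le> n" "\<forall>k<m. psum i k \<ge> 1" "m < n \<longrightarrow> psum i m \<le> 0"
    using mindex_props[of n i, OF n1 i0] m by auto
  have P1: "syls i e (m + 1) n @ xpow (psum i m) @ [yp] \<in> NF"
  proof (cases "m = n")
    case True then show ?thesis using NF_app_y0[of 1 "psum i m"] by (simp add: syls_empty)
  next
    case False
    then have mn: "m < n" using mp by simp
    have sp: "syls i e (Suc m) n = (syls i e (Suc (Suc m)) n @ xpow (i (Suc m))) @ [ylet (e (Suc m))]"
      using syls_split[of "Suc m" "Suc m" n i e] mn by (simp add: syls_self syl_def)
    have "syls i e (Suc m) n \<in> NF" using prefix_NF[OF nf] mn by simp
    then have "syls i e (Suc m) n @ xpow (psum i m) \<in> NF" by (rule NF_app_xpow) (simp add: sp)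
    then have a: "(syls i e (Suc (Suc m)) n @ xpow (i (Suc m))) @ [ylet (e (Suc m))] @ xpow (psum i m) \<in> NF"
      using sp by simp
    have lc: "loc (e (Suc m)) (psum i m) 1" using mp(4) mn cond False unfolding loc_def by auto
    have ea: "e (Suc m) \<in> {1,-1}" using eps mn by auto
    have "(syls i e (Suc (Suc m)) n @ xpow (i (Suc m))) @ [ylet (e (Suc m))] @ xpow (psum i m) @ [ylet 1] \<in> NF"
      by (rule NF_app_y[OF a ea _ lc]) simp
    then show ?thesis using sp by simp
  qed
  have a2: "(syls i e (m + 1) n @ xpow (psum i m)) @ [ylet 1] @ xpow (- psum i (m - 1) - 1) \<in> NF"
    using NF_app_xpow[OF P1] by simp
  have "psum i (m - 1) \<ge> 1" using mp by auto
  then have "loc 1 (- psum i (m - 1) - 1) (e m)" unfolding loc_def by auto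
  then have P2: "(syls i e (m + 1) n @ xpow (psum i m) @ [yp] @ xpow (- psum i (m - 1) - 1)) @ [ylet (e m)] \<in> NF"
    using NF_app_y[OF a2] eps mp by auto
  show ?thesis using tail_NF[OF P2 mp(1) mp(2) nf eps] by simp
qed

lemma case2_NF:
  assumes nf: "syls i e 1 n @ xpow (i 0) \<in> NF" and n1: "n \<ge> 1" and i0: "i 0 \<ge> 1"
    and eps: "\<forall>k. 1 \<le> k \<and> k \<le> n \<longrightarrow> e k \<in> {1, -1}" and m: "m = mindex i n"
    and cond: "\<not> (m = n \<or> psum i m \<noteq> 0 \<or> e (m + 1) = 1)"
  shows "syls i e (m + 2) n @ xpow (i (m + 1) + i m - 1) @ [ylet (e m)]
                    @ syls i e 1 (m - 1) @ xpow (i 0 + 1) \<in> NF"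
proof -
  have mp: "1 \<le> m" "m \<le> n" "\<forall>k<m. psum i k \<ge> 1" "m < n \<longrightarrow> psum i m \<le> 0"
    using mindex_props[of n i, OF n1 i0] m by auto
  have mn: "m < n" and sm0: "psum i m = 0" and em1: "e (Suc m) \<noteq> 1"
    using cond mp by auto
  have "e (Suc m) \<in> {1,-1}" using eps mn by auto
  then have em: "e (Suc m) = -1" using em1 by auto
  have "psum i m = psum i (m - 1) + i m" using psum_Suc[of i "m - 1"] mp(1) by simp
  moreover have "psum i (m - 1) \<ge> 1" using mp by auto
  ultimately have im: "i m \<le> -1" using sm0 by simp
  let ?c = "i (m + 1) + i m - 1"
  have P1: "syls i e (m + 2) n @ xpow ?c @ [ylet (e m)] \<in> NF"
  proof (cases "m + 1 = n")
    case True then show ?thesis using NF_app_y0[of "e m" ?c] eps mp by (simp add: syls_empty)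
  next
    case False
    then have mn2: "m + 2 \<le> n" using mn by simp
    have sp: "syls i e (Suc (Suc m)) n = (syls i e (Suc (Suc (Suc m))) n @ xpow (i (Suc (Suc m)))) @ [ylet (e (Suc (Suc m)))]"
      using syls_split[of "Suc (Suc m)" "Suc (Suc m)" n i e] mn2 by (simp add: syls_self syl_def)
    have "syls i e (Suc (Suc m)) n \<in> NF" using prefix_NF[OF nf, of "Suc m"] mn by simp
    then have "syls i e (Suc (Suc m)) n @ xpow ?c \<in> NF" by (rule NF_app_xpow) (simp add: sp)
    then have a: "(syls i e (Suc (Suc (Suc m))) n @ xpow (i (Suc (Suc m)))) @ [ylet (e (Suc (Suc m)))] @ xpow ?c \<in> NF"
      using sp by simp
    have "loc (e (Suc (Suc m))) (i (Suc m)) (e (Suc m))" using loc_all[OF nf eps, of "Suc m"] mn2 by simp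
    then have "i (Suc m) \<le> 1" using em unfolding loc_def by auto
    then have "loc (e (Suc (Suc m))) ?c (e m)" using im unfolding loc_def by auto
    then have "(syls i e (Suc (Suc (Suc m))) n @ xpow (i (Suc (Suc m)))) @ [ylet (e (Suc (Suc m)))] @ xpow ?c @ [ylet (e m)] \<in> NF"
      using NF_app_y[OF a] eps mn2 mp by auto
    then show ?thesis using sp by (simp add: numeral_2_eq_2)
  qed
  then have P1': "(syls i e (m + 2) n @ xpow ?c) @ [ylet (e m)] \<in> NF" by simp
  show ?thesis using tail_NF[OF P1' mp(1) mp(2) nf eps] by simp
qed

lemma case1_seq:
  assumes n1: "n \<ge> 1" and i0: "i 0 \<ge> 1" and eps: "\<forall>k. 1 \<le> k \<and> k \<le> n \<longrightarrow> e k \<in> {1, -1}"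
    and m: "m = mindex i n"
  shows "\<exists>ks. rewrseq (syls i e 1 n @ xpow (i 0) @ [yp]) ks
     (syls i e (m + 1) n @ xpow (psum i m) @ [yp] @ xpow (- psum i (m - 1) - 1) @ [ylet (e m)]
                    @ syls i e 1 (m - 1) @ xpow (i 0 + 1)) \<and>
     filter (\<lambda>k. k \<noteq> FreeR) ks = map (\<lambda>j. YR (psum i j)) [0..<m]"
proof -
  have m1: "1 \<le> m" using mindex_props[of n i, OF n1 i0] m by auto
  have "W i e n m = syls i e (m + 1) n @ xpow (psum i m) @ [yp] @ xpow (- psum i (m - 1) - 1) @ [ylet (e m)]
                    @ syls i e 1 (m - 1) @ xpow (i 0 + 1)" using m1 by (simp add: W_def T_def)
  then show ?thesis using W_seq[where n=n and i=i and e=e and k=m, OF n1 i0 eps] m by auto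
qed

lemma case2_seq:
  assumes n1: "n \<ge> 1" and i0: "i 0 \<ge> 1" and eps: "\<forall>k. 1 \<le> k \<and> k \<le> n \<longrightarrow> e k \<in> {1, -1}"
    and m: "m = mindex i n" and cond: "\<not> (m = n \<or> psum i m \<noteq> 0 \<or> e (m + 1) = 1)"
  shows "\<exists>ks. rewrseq (syls i e 1 n @ xpow (i 0) @ [yp]) ks
     (syls i e (m + 2) n @ xpow (i (m + 1) + i m - 1) @ [ylet (e m)]
                    @ syls i e 1 (m - 1) @ xpow (i 0 + 1)) \<and>
     filter (\<lambda>k. k \<noteq> FreeR) ks = map (\<lambda>j. YR (psum i j)) [0..<m]"
proof -
  have mp: "1 \<le> m" "m \<le> n"
    using mindex_props[of n i, OF n1 i0] m by auto
  have mn: "m < n" and sm0: "psum i m = 0" and em1: "e (Suc m) \<noteq> 1"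
    using cond mp by auto
  have "e (Suc m) \<in> {1,-1}" using eps mn by auto
  then have em: "e (Suc m) = -1" using em1 by auto
  have sm: "psum i m = psum i (m - 1) + i m" using psum_Suc[of i "m - 1"] mp(1) by simp
  obtain ks where ks: "rewrseq (syls i e 1 n @ xpow (i 0) @ [yp]) ks (W i e n m)"
    "filter (\<lambda>k. k \<noteq> FreeR) ks = map (\<lambda>j. YR (psum i j)) [0..<m]"
    using W_seq[where n=n and i=i and e=e and k=m, OF n1 i0 eps] m by auto
  let ?A = "syls i e (Suc (Suc m)) n"
  let ?R = "xpow (- psum i (m - 1) - 1) @ [ylet (e m)] @ syls i e 1 (m - 1) @ xpow (i 0 + 1)"
  have sp: "syls i e (Suc m) n = ?A @ xpow (i (Suc m)) @ [ylet (e (Suc m))]"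
    using syls_split[of "Suc m" "Suc m" n i e] mn by (simp add: syls_self syl_def)
  have Wm: "W i e n m = (?A @ xpow (i (Suc m))) @ [ym, linv ym] @ ?R"
    using mp(1) sm0 em sp by (simp add: W_def T_def)
  have st: "rstep FreeR ((?A @ xpow (i (Suc m))) @ [ym, linv ym] @ ?R) ((?A @ xpow (i (Suc m))) @ ?R)"
    by (rule rstep.free)
  have "i (Suc m) + (- psum i (m - 1) - 1) = i (m + 1) + i m - 1" using sm sm0 by simp
  then obtain ks2 where ks2: "set ks2 \<subseteq> {FreeR}"
     "rewrseq (xpow (i (Suc m)) @ xpow (- psum i (m - 1) - 1)) ks2 (xpow (i (m + 1) + i m - 1))"
    using xmerge_seq by blast
  have s2: "rewrseq ((?A @ xpow (i (Suc m))) @ ?R) ks2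
     (syls i e (m + 2) n @ xpow (i (m + 1) + i m - 1) @ [ylet (e m)] @ syls i e 1 (m - 1) @ xpow (i 0 + 1))"
    by (rule rconv[OF rewrseq_ctx[OF ks2(2), of ?A "[ylet (e m)] @ syls i e 1 (m - 1) @ xpow (i 0 + 1)"]])
       (simp_all add: numeral_2_eq_2)
  have "rewrseq (syls i e 1 n @ xpow (i 0) @ [yp]) (ks @ [FreeR] @ ks2)
     (syls i e (m + 2) n @ xpow (i (m + 1) + i m - 1) @ [ylet (e m)] @ syls i e 1 (m - 1) @ xpow (i 0 + 1))"
    using rewrseq_trans[OF ks(1)[unfolded Wm] rewrseq_trans[OF rewrseq_one[OF st] s2]] by simp
  moreover have "filter (\<lambda>k. k \<noteq> FreeR) (ks @ [FreeR] @ ks2) = map (\<lambda>j. YR (psum i j)) [0..<m]"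
    using ks(2) filter_free[OF ks2(1)] by simp
  ultimately show ?thesis by blast
qed

theorem lemma3p1:
  fixes g :: "letter list" and n :: nat and i e :: "nat \<Rightarrow> int"
  assumes notT: "\<not> on_T g yp"
    and eps: "\<forall>k. 1 \<le> k \<and> k \<le> n \<longrightarrow> e k \<in> {1, -1}"
    and gam: "nf g = syls i e 1 n @ xpow (i 0)"
  shows "n \<ge> 1 \<and> i 0 \<ge> 1 \<and> mindex i n \<ge> 1 \<and>
    (let m = mindex i n; s = psum i; \<gamma> = nf g;
         \<gamma>' = (if m = n \<or> s m \<noteq> 0 \<or> e (m + 1) = 1
               then syls i e (m + 1) n @ xpow (s m) @ [yp] @ xpow (- s (m - 1) - 1) @ [ylet (e m)]
                    @ syls i e 1 (m - 1) @ xpow (i 0 + 1)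
               else syls i e (m + 2) n @ xpow (i (m + 1) + i m - 1) @ [ylet (e m)]
                    @ syls i e 1 (m - 1) @ xpow (i 0 + 1))
     in nf (\<gamma> @ [yp]) = \<gamma>' \<and>
        (\<exists>ks. rewrseq (\<gamma> @ [yp]) ks \<gamma>' \<and>
              filter (\<lambda>k. k \<noteq> FreeR) ks = map (\<lambda>j. YR (s j)) [0..<m]))"
proof -
  have nf: "syls i e 1 n @ xpow (i 0) \<in> NF" using nf_spec[of g] gam by simp
  have n1: "n \<ge> 1"
  proof (rule ccontr)
    assume "\<not> n \<ge> 1"
    then have "n = 0" by simp
    then have "nf g @ [yp] = xpow (i 0) @ [ylet 1]" using gam by (simp add: syls_empty)
    then have "nf g @ [yp] \<in> NF" using NF_app_y0[of 1 "i 0"] by simp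
    then show False using onT1 notT by blast
  qed
  have sp1: "syls i e 1 n = syls i e 2 n @ xpow (i 1) @ [ylet (e 1)]"
    using syls_split[of 1 1 n i e] n1 by (simp add: syls_self syl_def numeral_2_eq_2)
  have e1: "e 1 \<in> {1,-1}" using eps n1 by auto
  have i0: "i 0 \<ge> 1"
  proof (rule ccontr)
    assume a: "\<not> i 0 \<ge> 1"
    show False
    proof (cases "i 0 = 0 \<and> e 1 = -1")
      case True
      then have "nf g = (syls i e 2 n @ xpow (i 1)) @ [ym]" using gam sp1 by simp
      then show False using onT2 notT by blast
    next
      case False
      then have l: "loc (e 1) (i 0) 1" using a e1 unfolding loc_def by auto
      have nf': "(syls i e 2 n @ xpow (i 1)) @ [ylet (e 1)] @ xpow (i 0) \<in> NF" using nf sp1 by simp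
      have "(syls i e 2 n @ xpow (i 1)) @ [ylet (e 1)] @ xpow (i 0) @ [ylet 1] \<in> NF"
        by (rule NF_app_y[OF nf' e1 _ l]) simp
      then have "nf g @ [yp] \<in> NF" using gam sp1 by simp
      then show False using onT1 notT by blast
    qed
  qed
  define m where "m = mindex i n"
  have m1: "mindex i n \<ge> 1" using mindex_props[of n i, OF n1 i0] by auto
  have main: "nf ((syls i e 1 n @ xpow (i 0)) @ [yp]) = G \<and>
        (\<exists>ks. rewrseq ((syls i e 1 n @ xpow (i 0)) @ [yp]) ks G \<and>
              filter (\<lambda>k. k \<noteq> FreeR) ks = map (\<lambda>j. YR (psum i j)) [0..<m])"
    if G: "G = (if m = n \<or> psum i m \<noteq> 0 \<or> e (m + 1) = 1
               then syls i e (m + 1) n @ xpow (psum i m) @ [yp] @ xpow (- psum i (m - 1) - 1) @ [ylet (e m)]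
                    @ syls i e 1 (m - 1) @ xpow (i 0 + 1)
               else syls i e (m + 2) n @ xpow (i (m + 1) + i m - 1) @ [ylet (e m)]
                    @ syls i e 1 (m - 1) @ xpow (i 0 + 1))" for G
  proof -
    have "G \<in> NF \<and> (\<exists>ks. rewrseq (syls i e 1 n @ xpow (i 0) @ [yp]) ks G \<and>
              filter (\<lambda>k. k \<noteq> FreeR) ks = map (\<lambda>j. YR (psum i j)) [0..<m])"
    proof (cases "m = n \<or> psum i m \<noteq> 0 \<or> e (m + 1) = 1")
      case True
      then show ?thesis using G case1_NF[OF nf n1 i0 eps m_def True] case1_seq[OF n1 i0 eps m_def] by simp
    next
      case False
      then show ?thesis using G case2_NF[OF nf n1 i0 eps m_def False] case2_seq[OF n1 i0 eps m_def False] by simp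
    qed
    then obtain ks where h: "G \<in> NF" "rewrseq (syls i e 1 n @ xpow (i 0) @ [yp]) ks G"
        "filter (\<lambda>k. k \<noteq> FreeR) ks = map (\<lambda>j. YR (psum i j)) [0..<m]" by blast
    have "same_elem ((syls i e 1 n @ xpow (i 0)) @ [yp]) G" using reds_same rewrseq_red h(2) by simp
    then have "nf ((syls i e 1 n @ xpow (i 0)) @ [yp]) = G" using nf_eqI h(1) by blast
    then show ?thesis using h by auto
  qed
  note M = main[OF refl, unfolded m_def gam[symmetric]]
  show ?thesis
    unfolding Let_def using n1 i0 m1 M by blast
qed

end
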